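(* Let $\Omega_{1/2}=\{\operatorname{Re}(s)>\tfrac12\}\setminus[\tfrac12,1]$. The following are equivalent: (1) The Riemann hypothesis holds, i.e. $\zeta(s)\ne0$ for $\operatorname{Re}(s)>\tfrac12$. (2) For every arithmetical list $M\subset\mathbb{P}$, the function $\frac{d}{ds}\eta_M(s)$ extends analytically to $\Omega_{1/2}$. (3) The function $s\mapsto\int_2^{\infty}\frac{\pi(t)\ln t}{t^{s+1}}\,dt$ (defined for $\operatorname{Re}(s)>1$) extends to an analytic function on $\Omega_{1/2}$.
   Context: Let $p_1=2<p_2=3<\dots$ be the primes in increasing order, $\mathbb{P}$ the set of primes, and $\pi(t)$ the number of primes $\le t$. An arithmetical list of reason $r\ge1$ is a set $M=\{p_{r_0+jr}:j\ge0\}$ for some integer $1\le r_0\le r$. $\eta_M(s)=\sum_{p\in M}p^{-s}$ for $\operatorname{Re}(s)>1$. Extension means agreement with the given function on $\{\operatorname{Re}(s)>1\}$. *)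

theory Defs
  imports "HOL-Complex_Analysis.Complex_Analysis" "HOL-Computational_Algebra.Primes"
    "HOL-Library.Infinite_Set"
begin

text \<open>The k-th prime, 1-indexed: p_1 = 2, p_2 = 3, ...\<close>
definition nth_prime1 :: "nat \<Rightarrow> nat" where
  "nth_prime1 k = enumerate {p::nat. prime p} (k - 1)"

definition arith_list :: "nat \<Rightarrow> nat \<Rightarrow> nat set" where
  "arith_list r r0 = {nth_prime1 (r0 + j * r) | j. True}"

definition is_arith_list :: "nat set \<Rightarrow> bool" where
  "is_arith_list M \<longleftrightarrow> (\<exists>r r0. 1 \<le> r \<and> 1 \<le> r0 \<and> r0 \<le> r \<and> M = arith_list r r0)"

text \<open>eta_M(s) = sum over p in M of p^(-s) (meaningful for Re s > 1).\<close>
definition eta_M :: "nat set \<Rightarrow> complex \<Rightarrow> complex" where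
  "eta_M M s = (\<Sum>\<^sub>\<infinity>p\<in>M. of_nat p powr (- s))"

definition prime_pi :: "real \<Rightarrow> nat" where
  "prime_pi t = card {p::nat. prime p \<and> real p \<le> t}"

text \<open>The Riemann zeta function on Re s > 0, s \<noteq> 1, as the (unique) analytic
  continuation of the Dirichlet series sum n^(-s) from Re s > 1.\<close>
definition riemann_zeta :: "complex \<Rightarrow> complex" where
  "riemann_zeta = (SOME f. f holomorphic_on ({s. Re s > 0} - {1}) \<and>
      (\<forall>s. Re s > 1 \<longrightarrow> f s = (\<Sum>n. of_nat (Suc n) powr (- s))))"

definition Omega_half :: "complex set" where
  "Omega_half = {s. Re s > 1/2} - complex_of_real ` {1/2..1}"

end

theory Submission
  imports Defs "HOL-Number_Theory.Number_Theory"
begin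

definition cp :: "nat \<Rightarrow> complex \<Rightarrow> complex" where
  "cp n s = of_nat n powr (-s)"

lemma norm_cp: "norm (cp n s) = real n powr (- Re s)"
  unfolding cp_def by (subst norm_powr_real_powr) auto

lemma cp_mult: "cp (m * n) s = cp m s * cp n s"
  unfolding cp_def by (simp add: powr_times_real)

lemma Ln_of_nat': "n > 0 \<Longrightarrow> Ln (of_nat n) = of_real (ln (real n))"
  by (metis Ln_of_real of_nat_0_less_iff of_real_of_nat_eq)

lemma cp_deriv: assumes "n > 0"
  shows "((\<lambda>s. cp n s) has_field_derivative (- of_real (ln (real n)) * cp n s)) (at s)"
proof -
  have "((\<lambda>s. of_nat n powr (-s)) has_field_derivative (Ln (of_nat n) * of_nat n powr (-s)) * (-1)) (at s)"
    using assms by (intro DERIV_chain2[OF has_field_derivative_powr_right]) (auto intro!: derivative_eq_intros)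
  then show ?thesis using assms by (simp add: cp_def Ln_of_nat')
qed

lemma ln_le_powr: fixes y e :: real assumes "y > 0" "e > 0" shows "ln y \<le> y powr e / e"
proof -
  have "ln (y powr e) \<le> y powr e - 1" using ln_le_minus_one[of "y powr e :: real"] assms by simp
  then have "e * ln y \<le> y powr e" using assms by (simp add: ln_powr)
  then show ?thesis using assms by (simp add: field_simps)
qed

lemma summable_Suc_powr: "b > 1 \<Longrightarrow> summable (\<lambda>n. real (Suc n) powr (-b))"
proof -
  assume "b > 1"
  then have "summable (\<lambda>n. real n powr (-b))" by (subst summable_real_powr_iff) auto
  then show ?thesis by (subst summable_Suc_iff[where f="\<lambda>n. real n powr (-b)"])
qed

lemma summ_pow: assumes x: "\<And>n. Suc n \<le> x n" and b: "b > 1"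
  shows "summable (\<lambda>n. real (x n) powr (-b))"
proof (rule summable_comparison_test[OF _ summable_Suc_powr[OF b]])
  show "\<exists>N. \<forall>n\<ge>N. norm (real (x n) powr - b) \<le> real (Suc n) powr - b"
  proof (intro exI[of _ 0] allI impI)
    fix n :: nat
    have "real (Suc n) \<le> real (x n)" by (metis of_nat_le_iff x)
    then show "norm (real (x n) powr - b) \<le> real (Suc n) powr - b"
      using b by (auto intro!: powr_mono2')
  qed
qed

lemma summ_logpow: assumes x: "\<And>n. Suc n \<le> x n" and b: "b > 1"
  shows "summable (\<lambda>n. ln (real (x n)) * real (x n) powr (-b))"
proof -
  define e where "e = (b - 1) / 2"
  have e: "e > 0" using b by (simp add: e_def)
  have "1 < b - e" using b unfolding e_def by (simp add: field_simps)
  then have "summable (\<lambda>n. (1/e) * real (x n) powr (-(b - e)))"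
    using summ_pow[OF x, of "b - e"] by (intro summable_mult) simp
  then show ?thesis
  proof (rule summable_comparison_test')
    fix n
    have xp: "real (x n) > 0" using x[of n] by linarith
    have l: "ln (real (x n)) \<ge> 0" using x[of n] by simp
    have "ln (real (x n)) * real (x n) powr (-b) \<le> (real (x n) powr e / e) * real (x n) powr (-b)"
      by (intro mult_right_mono ln_le_powr xp e) auto
    also have "\<dots> = (1/e) * real (x n) powr (-(b - e))"
      using xp by (simp add: powr_add[symmetric])
    finally show "norm (ln (real (x n)) * real (x n) powr (-b)) \<le> (1/e) * real (x n) powr (-(b - e))"
      using l by simp
  qed
qed

lemma dser:
  fixes x :: "nat \<Rightarrow> nat" and c :: "nat \<Rightarrow> complex"
  assumes x: "\<And>n. x n > 0"
    and summ: "\<And>a. a > A \<Longrightarrow> summable (\<lambda>n. norm (c n) * real (x n) powr (-a))"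
    and s: "Re s > A"
  shows "((\<lambda>z. \<Sum>n. c n * cp (x n) z) has_field_derivative
            (\<Sum>n. - c n * of_real (ln (real (x n))) * cp (x n) s)) (at s)"
    and "summable (\<lambda>n. c n * cp (x n) s)"
    and "summable (\<lambda>n. - c n * of_real (ln (real (x n))) * cp (x n) s)"
proof -
  define a where "a = (A + Re s) / 2"
  have aA: "a > A" and as: "Re s > a" using s by (auto simp: a_def)
  define S where "S = {z. Re z > a}"
  have oS: "open S" unfolding S_def by (rule open_halfspace_Re_gt)
  have sS: "s \<in> S" using as by (simp add: S_def)
  have hfd: "\<And>n z. z \<in> S \<Longrightarrow> ((\<lambda>z. c n * cp (x n) z) has_field_derivative
        (- c n * of_real (ln (real (x n))) * cp (x n) z)) (at z)"
  proof -
    fix n z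
    have "((\<lambda>z. c n * cp (x n) z) has_field_derivative c n * (- of_real (ln (real (x n))) * cp (x n) z)) (at z)"
      by (rule DERIV_cmult[OF cp_deriv[OF x]])
    then show "((\<lambda>z. c n * cp (x n) z) has_field_derivative
        (- c n * of_real (ln (real (x n))) * cp (x n) z)) (at z)" by (simp add: algebra_simps)
  qed
  have bd: "\<forall>\<^sub>F n in sequentially. \<forall>z\<in>S. norm (c n * cp (x n) z) \<le> norm (c n) * real (x n) powr (-a)"
  proof (intro always_eventually allI ballI)
    fix n z assume "z \<in> S"
    then have "Re z > a" by (simp add: S_def)
    moreover have "real (x n) \<ge> 1" using x[of n] by linarith
    ultimately have "real (x n) powr (- Re z) \<le> real (x n) powr (-a)"
      by (intro powr_mono) auto
    then show "norm (c n * cp (x n) z) \<le> norm (c n) * real (x n) powr (-a)"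
      unfolding norm_mult norm_cp by (rule mult_left_mono) simp
  qed
  obtain g g' where gg: "\<forall>z \<in> S. ((\<lambda>n. c n * cp (x n) z) sums g z) \<and>
      ((\<lambda>n. - c n * of_real (ln (real (x n))) * cp (x n) z) sums g' z) \<and> (g has_field_derivative g' z) (at z)"
    by (rule series_and_derivative_comparison[OF oS summ[OF aA] hfd bd]) blast
  have eq: "g z = (\<Sum>n. c n * cp (x n) z)" if "z \<in> S" for z
  proof -
    have "(\<lambda>n. c n * cp (x n) z) sums g z" using gg that by blast
    then show ?thesis by (rule sums_unique)
  qed
  have "(g has_field_derivative g' s) (at s)" using gg sS by blast
  moreover have "g' s = (\<Sum>n. - c n * of_real (ln (real (x n))) * cp (x n) s)"
    using gg sS by (intro sums_unique) blast
  ultimately show "((\<lambda>z. \<Sum>n. c n * cp (x n) z) has_field_derivative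
            (\<Sum>n. - c n * of_real (ln (real (x n))) * cp (x n) s)) (at s)"
    using has_field_derivative_transform_within_open[OF _ oS sS, of g _ "\<lambda>z. \<Sum>n. c n * cp (x n) z"] eq by simp
  show "summable (\<lambda>n. c n * cp (x n) s)" using gg sS sums_summable by blast
  show "summable (\<lambda>n. - c n * of_real (ln (real (x n))) * cp (x n) s)" using gg sS sums_summable by blast
qed


definition pr :: "nat \<Rightarrow> nat" where "pr n = enumerate {p::nat. prime p} n"

lemma inf_primes: "infinite {p::nat. prime p}" using primes_infinite by simp

lemma prime_pr: "prime (pr n)"
  using enumerate_in_set[OF inf_primes] by (simp add: pr_def)

lemma pr_less_iff [simp]: "pr m < pr n \<longleftrightarrow> m < n"
  unfolding pr_def using inf_primes by simp

lemma pr_le_iff [simp]: "pr m \<le> pr n \<longleftrightarrow> m \<le> n"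
  unfolding pr_def using inf_primes by simp

lemma pr_inj: "inj pr" unfolding pr_def using inj_enumerate[OF inf_primes] .

lemma pr_eq_iff [simp]: "pr m = pr n \<longleftrightarrow> m = n" using pr_inj by (auto dest: injD)

lemma pr_ge: "Suc (Suc n) \<le> pr n"
proof (induction n)
  case 0 then show ?case using prime_ge_2_nat[OF prime_pr[of 0]] by simp
next
  case (Suc n)
  have "pr n < pr (Suc n)" by simp
  then show ?case using Suc by linarith
qed

lemma pr_pos [simp]: "pr n > 0" using pr_ge[of n] by simp

lemma pr_ex: "prime p \<Longrightarrow> \<exists>n. pr n = p"
  unfolding pr_def using enumerate_Ex[OF inf_primes] by simp

lemma bij_pr: "bij_betw pr UNIV {p. prime p}"
  unfolding pr_def using bij_enumerate[OF inf_primes] .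

lemma nth_prime1_pr: "k \<ge> 1 \<Longrightarrow> nth_prime1 k = pr (k - 1)"
  by (simp add: nth_prime1_def pr_def)

definition qs :: "nat \<Rightarrow> nat \<Rightarrow> nat \<Rightarrow> nat" where
  "qs r r0 j = pr (r0 - 1 + j * r)"

lemma arith_list_eq: "r0 \<ge> 1 \<Longrightarrow> arith_list r r0 = range (qs r r0)"
  unfolding arith_list_def qs_def using nth_prime1_pr[of "r0 + _ * r"] by auto

lemma qs_inj: "r \<ge> 1 \<Longrightarrow> inj (qs r r0)"
  unfolding qs_def inj_on_def by simp

lemma qs_ge: "r \<ge> 1 \<Longrightarrow> Suc j \<le> qs r r0 j"
proof -
  assume r: "r \<ge> 1"
  have "j \<le> j * r" using mult_le_mono2[OF r, of j] by simp
  then have "Suc j \<le> Suc (Suc (r0 - 1 + j * r))" by linarith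
  also have "\<dots> \<le> qs r r0 j" unfolding qs_def by (rule pr_ge)
  finally show ?thesis .
qed

lemma infsum_eq_suminf_nat:
  fixes f :: "nat \<Rightarrow> 'a::banach"
  assumes "summable (\<lambda>n. norm (f n))"
  shows "infsum f UNIV = suminf f"
  using norm_summable_imp_has_sum[OF assms summable_sums[OF summable_norm_cancel[OF assms]]]
  by (rule infsumI)

lemma summ_cp: assumes x: "\<And>n. Suc n \<le> x n" and s: "Re s > 1"
  shows "summable (\<lambda>n. norm (cp (x n) s))"
  unfolding norm_cp using summ_pow[OF x s] .

lemma summ_lncp: assumes x: "\<And>n. Suc n \<le> x n" and s: "Re s > 1"
  shows "summable (\<lambda>n. norm (of_real (ln (real (x n))) * cp (x n) s))"
proof -
  have "norm (of_real (ln (real (x n))) * cp (x n) s) = ln (real (x n)) * real (x n) powr (- Re s)" for n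
  proof -
    have "ln (real (x n)) \<ge> 0" using x[of n] by simp
    then show ?thesis by (simp add: norm_mult norm_cp)
  qed
  then show ?thesis using summ_logpow[OF x s] by simp
qed

lemma dser1: assumes x: "\<And>n. Suc n \<le> x n" and s: "Re s > 1"
  shows "((\<lambda>z. \<Sum>n. cp (x n) z) has_field_derivative
            (\<Sum>n. - of_real (ln (real (x n))) * cp (x n) s)) (at s)"
proof -
  have xp: "\<And>n. x n > 0" using x by (metis less_le_trans zero_less_Suc)
  have "\<And>a. a > 1 \<Longrightarrow> summable (\<lambda>n. norm (1::complex) * real (x n) powr (-a))"
    using summ_pow[OF x] by simp
  from dser(1)[OF xp this s] show ?thesis by simp
qed

lemma dser2: assumes x: "\<And>n. Suc n \<le> x n" and s: "Re s > 1"
  shows "((\<lambda>z. \<Sum>n. of_real (ln (real (x n))) * cp (x n) z) has_field_derivative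
            (\<Sum>n. - of_real (ln (real (x n))) * of_real (ln (real (x n))) * cp (x n) s)) (at s)"
proof -
  have xp: "\<And>n. x n > 0" using x by (metis less_le_trans zero_less_Suc)
  have "\<And>a. a > 1 \<Longrightarrow> summable (\<lambda>n. norm (of_real (ln (real (x n))) :: complex) * real (x n) powr (-a))"
  proof -
    fix a :: real assume "a > 1"
    have "norm (of_real (ln (real (x n))) :: complex) = ln (real (x n))" for n
      using x[of n] by simp
    then show "summable (\<lambda>n. norm (of_real (ln (real (x n))) :: complex) * real (x n) powr (-a))"
      using summ_logpow[OF x \<open>a > 1\<close>] by simp
  qed
  from dser(1)[OF xp this s] show ?thesis .
qed

lemma eta_M_range:
  assumes inj: "inj x" and x: "\<And>n. Suc n \<le> x n" and s: "Re s > 1"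
  shows "eta_M (range x) s = (\<Sum>n. cp (x n) s)"
proof -
  have "eta_M (range x) s = infsum (\<lambda>n. cp (x n) s) UNIV"
    unfolding eta_M_def using infsum_reindex[OF inj, of "\<lambda>p. of_nat p powr (-s)"]
    by (simp add: o_def cp_def)
  also have "\<dots> = (\<Sum>n. cp (x n) s)"
    by (rule infsum_eq_suminf_nat[OF summ_cp[OF x s]])
  finally show ?thesis .
qed

lemma deriv_eta_M_range:
  assumes inj: "inj x" and x: "\<And>n. Suc n \<le> x n" and s: "Re s > 1"
  shows "deriv (eta_M (range x)) s = (\<Sum>n. - of_real (ln (real (x n))) * cp (x n) s)"
proof -
  have "(eta_M (range x) has_field_derivative (\<Sum>n. - of_real (ln (real (x n))) * cp (x n) s)) (at s)"
    using has_field_derivative_transform_within_open[OF dser1[OF x s] open_halfspace_Re_gt[of 1], of "eta_M (range x)"]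
      eta_M_range[OF inj x] s by simp
  then show ?thesis by (rule DERIV_imp_deriv)
qed

definition Pz :: "complex \<Rightarrow> complex" where "Pz s = (\<Sum>n. cp (pr n) s)"
definition Qz :: "complex \<Rightarrow> complex" where "Qz s = (\<Sum>n. of_real (ln (real (pr n))) * cp (pr n) s)"

lemma pr_ge1: "Suc n \<le> pr n" using pr_ge[of n] by simp

lemma Pz_deriv: "Re s > 1 \<Longrightarrow> (Pz has_field_derivative - Qz s) (at s)"
proof -
  assume s: "Re s > 1"
  have "(\<Sum>n. - of_real (ln (real (pr n))) * cp (pr n) s) = - Qz s"
    unfolding Qz_def using summ_lncp[OF pr_ge1 s]
    by (subst suminf_minus[symmetric]) (auto intro: summable_norm_cancel)
  then show ?thesis using dser1[OF pr_ge1 s] unfolding Pz_def[abs_def] by simp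
qed

lemma Qz_holo: "Qz holomorphic_on {s. Re s > 1}"
proof -
  have "\<And>s. Re s > 1 \<Longrightarrow> Qz field_differentiable (at s)"
    using dser2[OF pr_ge1] unfolding Qz_def[abs_def] field_differentiable_def by blast
  then show ?thesis
    by (simp add: holomorphic_on_open open_halfspace_Re_gt field_differentiable_def)
qed

lemma Pz_holo: "Pz holomorphic_on {s. Re s > 1}"
  using Pz_deriv by (simp add: holomorphic_on_open open_halfspace_Re_gt) blast

lemma Pz_eta: "Re s > 1 \<Longrightarrow> eta_M {p. prime p} s = Pz s"
proof -
  assume s: "Re s > 1"
  have "{p. prime p} = range pr" using bij_pr by (simp add: bij_betw_def)
  then show ?thesis using eta_M_range[OF pr_inj pr_ge1 s] by (simp add: Pz_def)
qed

lemma deriv_eta_all: "Re s > 1 \<Longrightarrow> deriv (eta_M (arith_list 1 1)) s = - Qz s"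
proof -
  assume s: "Re s > 1"
  have "arith_list 1 1 = range pr" by (simp add: arith_list_eq qs_def[abs_def])
  then have "deriv (eta_M (arith_list 1 1)) s = (\<Sum>n. - of_real (ln (real (pr n))) * cp (pr n) s)"
    using deriv_eta_M_range[OF pr_inj pr_ge1 s] by simp
  also have "\<dots> = - Qz s"
    unfolding Qz_def using summ_lncp[OF pr_ge1 s]
    by (subst suminf_minus[symmetric]) (auto intro: summable_norm_cancel)
  finally show ?thesis .
qed

lemma is_arith_list_1: "is_arith_list (arith_list 1 1)"
  unfolding is_arith_list_def by auto


definition gz :: "complex \<Rightarrow> nat \<Rightarrow> complex" where
  "gz s k = of_nat k powr (1 - s) / (1 - s)"

definition tz :: "complex \<Rightarrow> nat \<Rightarrow> complex" where
  "tz s n = cp (Suc n) s - (gz s (Suc (Suc n)) - gz s (Suc n))"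

definition zeta0 :: "complex \<Rightarrow> complex" where
  "zeta0 s = 1 / (s - 1) + (\<Sum>n. tz s n)"

lemma tz_bound:
  assumes s0: "Re s > 0" and s1: "s \<noteq> 1"
  shows "norm (tz s n) \<le> norm s * real (Suc n) powr (- Re s - 1)"
proof -
  define m where "m = real (Suc n)"
  have m1: "m \<ge> 1" by (simp add: m_def)
  define a :: complex where "a = of_real m"
  define b :: complex where "b = of_real (m + 1)"
  define F :: "nat \<Rightarrow> complex \<Rightarrow> complex" where
    "F i = (if i = 0 then (\<lambda>z. z powr (1 - s) / (1 - s)) else if i = 1 then (\<lambda>z. z powr (- s))
            else (\<lambda>z. - s * z powr (- s - 1)))" for i
  define S where "S = closed_segment a b"
  have memS: "\<exists>t. z = of_real t \<and> m \<le> t \<and> t \<le> m + 1" if "z \<in> S" for z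
  proof -
    have "z \<in> of_real ` closed_segment m (m + 1)"
      using that unfolding S_def a_def b_def closed_segment_of_real .
    then show ?thesis by (auto simp: closed_segment_eq_real_ivl)
  qed
  have nonpos: "z \<notin> \<real>\<^sub>\<le>\<^sub>0" if "z \<in> S" for z
    using memS[OF that] m1 by (auto simp: nonpos_Reals_def)
  have s1': "1 - s \<noteq> 0" using s1 by simp
  have der: "(F i has_field_derivative F (Suc i) z) (at z within S)"
    if zS: "z \<in> S" and i1: "i \<le> 1" for i z
  proof -
    have nz: "z \<notin> \<real>\<^sub>\<le>\<^sub>0" by (rule nonpos[OF zS])
    consider "i = 0" | "i = 1" using i1 by linarith
    then show ?thesis
    proof cases
      case 1
      have "((\<lambda>z. z powr (1 - s) / (1 - s)) has_field_derivative
              ((1 - s) * z powr (1 - s - 1)) / (1 - s)) (at z)"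
        by (intro DERIV_cdivide has_field_derivative_powr nz)
      then have "((\<lambda>z. z powr (1 - s) / (1 - s)) has_field_derivative z powr (- s)) (at z)"
        using s1' by simp
      then show ?thesis using 1 by (simp add: F_def has_field_derivative_at_within)
    next
      case 2
      have "((\<lambda>z. z powr (- s)) has_field_derivative (- s) * z powr (- s - 1)) (at z)"
        by (intro has_field_derivative_powr nz)
      then show ?thesis using 2 by (simp add: F_def has_field_derivative_at_within)
    qed
  qed
  have B: "norm (F (Suc 1) z) \<le> norm s * m powr (- Re s - 1)" if zS: "z \<in> S" for z
  proof -
    obtain t where t: "z = of_real t" "m \<le> t" "t \<le> m + 1" using memS[OF zS] by blast
    have "norm (F (Suc 1) z) = norm s * t powr (- Re s - 1)"
      using t m1 by (simp add: F_def norm_mult norm_powr_real_powr)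
    also have "\<dots> \<le> norm s * m powr (- Re s - 1)"
      using t m1 s0 by (intro mult_left_mono powr_mono2') auto
    finally show ?thesis .
  qed
  have aS: "a \<in> S" and bS: "b \<in> S" by (auto simp: S_def)
  have T: "norm (F 0 b - (\<Sum>i\<le>1. F i a * (b - a) ^ i / fact i))
           \<le> norm s * m powr (- Re s - 1) * norm (b - a) ^ Suc 1 / fact 1"
    by (rule complex_Taylor[OF convex_closed_segment[of a b, folded S_def] der B aS bS])
  have ba: "b - a = 1" by (simp add: a_def b_def)
  have "tz s n = - (F 0 b - (\<Sum>i\<le>1. F i a * (b - a) ^ i / fact i))"
  proof -
    have e1: "(of_nat (Suc n) :: complex) = a" by (simp add: a_def m_def)
    have e2: "(of_nat (Suc (Suc n)) :: complex) = b" by (simp add: b_def m_def)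
    show ?thesis unfolding tz_def gz_def cp_def e1 e2 ba
      by (simp add: F_def)
  qed
  then have "norm (tz s n) = norm (F 0 b - (\<Sum>i\<le>1. F i a * (b - a) ^ i / fact i))"
    by (simp only: norm_minus_cancel)
  with T ba show ?thesis by (simp add: m_def)
qed

lemma holo_series_local:
  fixes f :: "nat \<Rightarrow> complex \<Rightarrow> complex"
  assumes S: "open S" and hol: "\<And>n. f n holomorphic_on S"
    and bd: "\<And>x. x \<in> S \<Longrightarrow> \<exists>d h. 0 < d \<and> summable h \<and> (\<forall>n. \<forall>y\<in>ball x d \<inter> S. norm (f n y) \<le> h n)"
  shows "(\<lambda>x. \<Sum>n. f n x) holomorphic_on S" and "\<And>x. x \<in> S \<Longrightarrow> summable (\<lambda>n. f n x)"
proof -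
  have hfd: "\<And>n x. x \<in> S \<Longrightarrow> (f n has_field_derivative deriv (f n) x) (at x)"
    using holomorphic_derivI[OF hol S] by blast
  have to_g: "\<exists>d h. 0 < d \<and> summable h \<and> (\<forall>\<^sub>F n in sequentially. \<forall>y\<in>ball x d \<inter> S. norm (f n y) \<le> h n)"
    if "x \<in> S" for x
  proof -
    obtain d h where "0 < d" "summable h" "\<forall>n. \<forall>y\<in>ball x d \<inter> S. norm (f n y) \<le> h n"
      using bd[OF \<open>x \<in> S\<close>] by blast
    then show ?thesis by (intro exI[of _ d] exI[of _ h]) (auto intro: always_eventually)
  qed
  obtain g g' where gg: "\<forall>x \<in> S. ((\<lambda>n. f n x) sums g x) \<and> ((\<lambda>n. deriv (f n) x) sums g' x) \<and> (g has_field_derivative g' x) (at x)"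
    using series_and_derivative_comparison_local[OF S hfd to_g] by blast
  have eq: "g x = (\<Sum>n. f n x)" if "x \<in> S" for x
    using gg that sums_unique by blast
  show "(\<lambda>x. \<Sum>n. f n x) holomorphic_on S"
    unfolding holomorphic_on_open[OF S]
  proof
    fix x assume xS: "x \<in> S"
    have "(g has_field_derivative g' x) (at x)" using gg xS by blast
    then have "((\<lambda>x. \<Sum>n. f n x) has_field_derivative g' x) (at x)"
      by (rule has_field_derivative_transform_within_open[OF _ S xS]) (use eq in auto)
    then show "\<exists>f'. ((\<lambda>x. \<Sum>n. f n x) has_field_derivative f') (at x)" by blast
  qed
  show "\<And>x. x \<in> S \<Longrightarrow> summable (\<lambda>n. f n x)" using gg sums_summable by blast
qed

definition D0 :: "complex set" where "D0 = {s. Re s > 0} - {1}"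

lemma open_D0: "open D0"
  unfolding D0_def by (intro open_Diff open_halfspace_Re_gt) auto

lemma connected_D0: "connected D0"
  unfolding D0_def
  by (intro connected_open_delete open_halfspace_Re_gt convex_connected convex_halfspace_Re_gt) auto

lemma tz_holo: "(\<lambda>s. tz s n) holomorphic_on D0"
proof -
  have "\<And>s. s \<in> D0 \<Longrightarrow> 1 - s \<noteq> 0" by (auto simp: D0_def)
  then show ?thesis unfolding tz_def gz_def cp_def
    by (intro holomorphic_intros) auto
qed

lemma tz_summ_holo:
  shows "(\<lambda>s. \<Sum>n. tz s n) holomorphic_on D0" and "\<And>s. s \<in> D0 \<Longrightarrow> summable (\<lambda>n. tz s n)"
proof -
  have bd: "\<exists>d h. 0 < d \<and> summable h \<and> (\<forall>n. \<forall>y\<in>ball x d \<inter> D0. norm (tz y n) \<le> h n)"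
    if xD: "x \<in> D0" for x
  proof -
    have x0: "Re x > 0" using xD by (auto simp: D0_def)
    define d where "d = min (Re x / 2) 1"
    have d: "d > 0" using x0 by (simp add: d_def)
    define h where "h n = (norm x + 1) * real (Suc n) powr (- (Re x / 2) - 1)" for n
    have sm: "summable (\<lambda>n. real (Suc n) powr (- (Re x / 2) - 1))"
    proof -
      have e: "- (Re x / 2) - 1 = - (Re x/2 + 1)" by simp
      show ?thesis unfolding e by (rule summable_Suc_powr) (use x0 in simp)
    qed
    have "summable h" unfolding h_def by (rule summable_mult[OF sm])
    moreover have "\<forall>n. \<forall>y\<in>ball x d \<inter> D0. norm (tz y n) \<le> h n"
    proof (intro allI ballI)
      fix n y assume y: "y \<in> ball x d \<inter> D0"
      have dxy: "norm (x - y) < d" using y by (auto simp: dist_norm)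
      have "\<bar>Re x - Re y\<bar> \<le> norm (x - y)" using abs_Re_le_cmod[of "x - y"] by simp
      then have ry: "Re y \<ge> Re x / 2" using dxy by (auto simp: d_def)
      have ny: "norm y \<le> norm x + 1" using dxy norm_triangle_ineq3[of x y] by (auto simp: d_def norm_minus_commute)
      have y0: "Re y > 0" and y1: "y \<noteq> 1" using y by (auto simp: D0_def)
      have "norm (tz y n) \<le> norm y * real (Suc n) powr (- Re y - 1)" by (rule tz_bound[OF y0 y1])
      also have "\<dots> \<le> (norm x + 1) * real (Suc n) powr (- (Re x / 2) - 1)"
        by (intro mult_mono ny powr_mono) (use ry in auto)
      finally show "norm (tz y n) \<le> h n" by (simp add: h_def)
    qed
    ultimately show ?thesis using d by blast
  qed
  show "(\<lambda>s. \<Sum>n. tz s n) holomorphic_on D0" "\<And>s. s \<in> D0 \<Longrightarrow> summable (\<lambda>n. tz s n)"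
    using holo_series_local[OF open_D0 tz_holo bd] by auto
qed

lemma zeta0_holo: "zeta0 holomorphic_on D0"
proof -
  have "\<And>s. s \<in> D0 \<Longrightarrow> s - 1 \<noteq> 0" by (auto simp: D0_def)
  then have "(\<lambda>s. 1 / (s - 1)) holomorphic_on D0" by (intro holomorphic_intros) auto
  then show ?thesis unfolding zeta0_def[abs_def]
    by (intro holomorphic_on_add tz_summ_holo(1))
qed

lemma zeta0_series:
  assumes s: "Re s > 1"
  shows "zeta0 s = (\<Sum>n. cp (Suc n) s)"
proof -
  define G where "G n = gz s (Suc n)" for n
  have s1: "1 - s \<noteq> 0" using s by auto
  have "(\<lambda>n. norm (G n)) \<longlonglongrightarrow> 0"
  proof -
    have nG: "norm (G n) = real (Suc n) powr (1 - Re s) / norm (1 - s)" for n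
      unfolding G_def gz_def by (simp add: norm_divide norm_powr_real_powr)
    have lim: "filterlim (\<lambda>n. real (Suc n)) at_top sequentially"
      by (rule filterlim_compose[OF filterlim_real_sequentially filterlim_Suc])
    have "(\<lambda>n. real (Suc n) powr (1 - Re s)) \<longlonglongrightarrow> 0"
      using tendsto_neg_powr[of "1 - Re s", OF _ lim] s by simp
    then have "(\<lambda>n. real (Suc n) powr (1 - Re s) / norm (1 - s)) \<longlonglongrightarrow> 0 / norm (1 - s)"
      by (intro tendsto_divide) (use s1 in auto)
    then show ?thesis unfolding nG by simp
  qed
  then have G0: "G \<longlonglongrightarrow> 0" by (simp add: tendsto_norm_zero_iff)
  have t1: "(\<lambda>n. G (Suc n) - G n) sums (0 - G 0)" by (rule telescope_sums[OF G0])
  have t2: "(\<lambda>n. cp (Suc n) s) sums (\<Sum>n. cp (Suc n) s)"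
    using summable_norm_cancel[OF summ_cp[of Suc, OF _ s]] by (intro summable_sums) auto
  have "(\<lambda>n. cp (Suc n) s - (G (Suc n) - G n)) sums ((\<Sum>n. cp (Suc n) s) - (0 - G 0))"
    by (rule sums_diff[OF t2 t1])
  then have "(\<lambda>n. tz s n) sums ((\<Sum>n. cp (Suc n) s) + 1 / (1 - s))"
    by (simp add: tz_def G_def gz_def)
  then have "(\<Sum>n. tz s n) = (\<Sum>n. cp (Suc n) s) + 1 / (1 - s)" by (rule sums_unique[symmetric])
  then show ?thesis unfolding zeta0_def using s1
    by (simp add: field_simps)
qed


lemma of_nat_powr_of_real: "(of_nat k :: complex) powr (of_real c) = of_real (real k powr c)"
  by (metis of_real_of_nat_eq powr_of_real of_nat_0_le_iff)

lemma cp_real: "cp k (of_real c) = of_real (real k powr (- c))"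
proof -
  have "- (of_real c :: complex) = of_real (- c)" by simp
  then show ?thesis unfolding cp_def by (simp only: of_nat_powr_of_real)
qed

lemma gz_real: "gz (of_real c) k = of_real (real k powr (1 - c) / (1 - c))"
proof -
  have "1 - (of_real c :: complex) = of_real (1 - c)" by simp
  then show ?thesis unfolding gz_def by (simp only: of_nat_powr_of_real of_real_divide)
qed

lemma mvt_ineq:
  fixes m c :: real
  assumes m: "m \<ge> 1" and c: "0 < c" "c < 1"
  shows "(m + 1) powr (c - 1) \<le> ((m + 1) powr c - m powr c) / c"
proof -
  have "\<exists>z::real. m < z \<and> z < m + 1 \<and> ((m + 1) powr c - m powr c = ((m + 1) - m) * (c * z powr (c - 1)))"
    by (rule MVT2) (use m in \<open>auto intro!: has_real_derivative_powr\<close>)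
  then obtain z where z: "m < z" "z < m + 1" "(m + 1) powr c - m powr c = c * z powr (c - 1)" by auto
  have "(m + 1) powr (c - 1) \<le> z powr (c - 1)"
    using z m c by (intro powr_mono2') auto
  then show ?thesis using z c by (simp add: field_simps)
qed

lemma Re_tz_real:
  assumes "0 < c" "c < 1"
  shows "Re (tz (of_real c) n) \<le> real (Suc n) powr (- c) - real (Suc (Suc n)) powr (- c)"
proof -
  define m where "m = real (Suc n)"
  have m: "m \<ge> 1" by (simp add: m_def)
  have e: "real (Suc (Suc n)) = m + 1" by (simp add: m_def)
  have "Re (tz (of_real c) n) = m powr (- c) - ((m + 1) powr (1 - c) / (1 - c) - m powr (1 - c) / (1 - c))"
    unfolding tz_def cp_real gz_real e[symmetric] m_def by simp
  also have "\<dots> = m powr (- c) - ((m + 1) powr (1 - c) - m powr (1 - c)) / (1 - c)"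
    by (simp add: diff_divide_distrib)
  also have "\<dots> \<le> m powr (- c) - (m + 1) powr ((1 - c) - 1)"
    using mvt_ineq[OF m, of "1 - c"] assms by simp
  finally show ?thesis unfolding e m_def[symmetric] by simp
qed

lemma zeta0_real_neg:
  assumes c: "0 < c" "c < 1"
  shows "zeta0 (of_real c) \<noteq> 0"
proof -
  have cD: "of_real c \<in> D0" using c by (auto simp: D0_def)
  have sm: "summable (\<lambda>n. tz (of_real c) n)" by (rule tz_summ_holo(2)[OF cD])
  define f where "f n = real (Suc n) powr (- c)" for n
  have "filterlim (\<lambda>n. real (Suc n)) at_top sequentially"
    by (rule filterlim_compose[OF filterlim_real_sequentially filterlim_Suc])
  then have f0: "f \<longlonglongrightarrow> 0" unfolding f_def using tendsto_neg_powr[of "- c"] c by simp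
  have tel: "(\<lambda>n. f n - f (Suc n)) sums (f 0 - 0)" by (rule telescope_sums'[OF f0])
  have "(\<Sum>n. Re (tz (of_real c) n)) \<le> (\<Sum>n. f n - f (Suc n))"
    by (intro suminf_le summable_Re[OF sm] sums_summable[OF tel]) (use Re_tz_real[OF c] in \<open>simp add: f_def\<close>)
  also have "\<dots> = 1" using sums_unique[OF tel] by (simp add: f_def)
  finally have le: "(\<Sum>n. Re (tz (of_real c) n)) \<le> 1" .
  have "Re (zeta0 (of_real c)) = Re (1 / (of_real c - 1)) + (\<Sum>n. Re (tz (of_real c) n))"
    unfolding zeta0_def using Re_suminf[OF sm] by simp
  also have "Re (1 / (of_real c - 1)) = 1 / (c - 1)"
    by (metis Re_complex_of_real of_real_1 of_real_diff of_real_divide)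
  finally have "Re (zeta0 (of_real c)) \<le> 1 / (c - 1) + 1" using le by simp
  also have "1 / (c - 1) + 1 < 0" using c by (simp add: field_simps)
  finally show ?thesis by auto
qed

lemma zeta0_2: "zeta0 2 \<noteq> 0"
proof -
  have "zeta0 2 = (\<Sum>n. cp (Suc n) 2)" by (rule zeta0_series) simp
  have sm: "summable (\<lambda>n. cp (Suc n) 2)"
    using summable_norm_cancel[OF summ_cp[of Suc 2]] by simp
  have cp2: "cp k 2 = of_real (real k powr (- 2))" for k
    using cp_real[of k 2] by simp
  have "Re (zeta0 2) = (\<Sum>n. Re (cp (Suc n) 2))"
    using \<open>zeta0 2 = _\<close> Re_suminf[OF sm] by simp
  also have "\<dots> > 0"
    by (rule suminf_pos) (use summable_Re[OF sm] in \<open>auto simp: cp2\<close>)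
  finally show ?thesis by auto
qed

lemma rz_eq: assumes "s \<in> D0" shows "riemann_zeta s = zeta0 s"
proof -
  have ex: "\<exists>f. f holomorphic_on ({s. Re s > 0} - {1}) \<and>
      (\<forall>s. Re s > 1 \<longrightarrow> f s = (\<Sum>n. of_nat (Suc n) powr (- s)))"
    by (rule exI[of _ zeta0]) (use zeta0_holo zeta0_series in \<open>auto simp: D0_def cp_def\<close>)
  have rz: "riemann_zeta holomorphic_on D0" "\<And>s. Re s > 1 \<Longrightarrow> riemann_zeta s = (\<Sum>n. of_nat (Suc n) powr (- s))"
    using someI_ex[OF ex] unfolding riemann_zeta_def[symmetric] D0_def by auto
  show ?thesis
  proof (rule analytic_continuation_open[of "{s. Re s > 1}" D0 riemann_zeta zeta0 s])
    show "open {s. Re s > 1}" by (rule open_halfspace_Re_gt)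
    show "{s. Re s > 1} \<noteq> {}" by (auto intro: exI[of _ 2])
    show "{s. Re s > 1} \<subseteq> D0" by (auto simp: D0_def)
    show "\<And>z. z \<in> {s. Re s > 1} \<Longrightarrow> riemann_zeta z = zeta0 z"
      using rz(2) zeta0_series by (simp add: cp_def)
  qed (use open_D0 connected_D0 rz(1) zeta0_holo assms in auto)
qed


lemma range_Suc_eq: "range Suc = {1::nat..}"
  by (auto simp: image_iff dest: Suc_le_D)

lemma suc_abs_summable:
  fixes f :: "nat \<Rightarrow> complex"
  assumes sm: "summable (\<lambda>n. norm (f (Suc n)))"
  shows "(\<lambda>x. norm (f x)) summable_on {1..}" and "infsum f {1..} = (\<Sum>n. f (Suc n))"
proof -
  have "(\<lambda>n. norm (f (Suc n))) summable_on UNIV"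
    by (rule norm_summable_imp_summable_on) (use sm in simp)
  then show "(\<lambda>x. norm (f x)) summable_on {1..}"
    unfolding range_Suc_eq[symmetric] by (subst summable_on_reindex) (auto simp: o_def)
  have "infsum f {1..} = infsum (f \<circ> Suc) UNIV"
    unfolding range_Suc_eq[symmetric] by (rule infsum_reindex) simp
  also have "\<dots> = (\<Sum>n. f (Suc n))"
    using infsum_eq_suminf_nat[of "f \<circ> Suc"] sm by (simp add: o_def)
  finally show "infsum f {1..} = (\<Sum>n. f (Suc n))" .
qed

lemma prod_has_sum:
  fixes a b :: "nat \<Rightarrow> complex"
  assumes a: "(\<lambda>x. norm (a x)) summable_on A" and b: "(\<lambda>x. norm (b x)) summable_on B"
  shows "((\<lambda>(x,y). a x * b y) has_sum (infsum a A * infsum b B)) (A \<times> B)"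
proof -
  have ab: "(\<lambda>z. norm ((\<lambda>(x,y). a x * b y) z)) summable_on (A \<times> B)"
  proof (subst Infinite_Sum.abs_summable_on_Sigma_iff, intro conjI ballI)
    fix x assume "x \<in> A"
    show "(\<lambda>y. norm (case (x, y) of (x, y) \<Rightarrow> a x * b y)) summable_on B"
      using summable_on_cmult_right[OF b, of "norm (a x)"] by (simp add: norm_mult)
  next
    have nn: "0 \<le> infsum (\<lambda>y. norm (b y)) B" by (rule infsum_nonneg) simp
    have "(\<lambda>x. norm (norm (a x) * infsum (\<lambda>y. norm (b y)) B)) summable_on A"
      using summable_on_cmult_left[OF a, of "infsum (\<lambda>y. norm (b y)) B"]
      by (simp add: abs_mult nn)
    moreover have "infsum (\<lambda>y. norm (case (x, y) of (x, y) \<Rightarrow> a x * b y)) B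
        = norm (a x) * infsum (\<lambda>y. norm (b y)) B" for x
      by (simp add: norm_mult infsum_cmult_right')
    ultimately show "(\<lambda>x. norm (infsum (\<lambda>y. norm (case (x, y) of (x, y) \<Rightarrow> a x * b y)) B)) summable_on A"
      by simp
  qed
  then have sab: "(\<lambda>(x,y). a x * b y) summable_on (A \<times> B)" by (rule abs_summable_summable)
  have "infsum (\<lambda>x. infsum (\<lambda>y. (\<lambda>(x,y). a x * b y) (x,y)) B) A = infsum (\<lambda>(x,y). a x * b y) (A \<times> B)"
    by (rule infsum_Sigma_banach) (use sab in simp)
  moreover have "infsum (\<lambda>x. infsum (\<lambda>y. (\<lambda>(x,y). a x * b y) (x,y)) B) A = infsum a A * infsum b B"
    by (simp add: infsum_cmult_right' infsum_cmult_left')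
  ultimately show ?thesis using sab by (metis has_sum_infsum)
qed

lemma cp_power: "cp (p ^ k) s = cp p s ^ k"
proof (induction k)
  case 0 then show ?case by (simp add: cp_def)
next
  case (Suc k) then show ?case by (simp only: power_Suc cp_mult)
qed

definition Rz :: "complex \<Rightarrow> complex" where
  "Rz s = (\<Sum>n. of_real (ln (real (pr n))) * cp (pr n) s ^ 2 / (1 - cp (pr n) s))"

lemma norm_cp_pr_lt1: "Re s > 0 \<Longrightarrow> norm (cp (pr n) s) < 1"
proof -
  assume "Re s > 0"
  moreover have "real (pr n) > 1" using pr_ge[of n] by simp
  ultimately show ?thesis unfolding norm_cp by (simp add: powr_less_one)
qed

lemma cp_pr_ne1: "Re s > 0 \<Longrightarrow> 1 - cp (pr n) s \<noteq> 0"
  using norm_cp_pr_lt1[of s n] by auto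

lemma Lam_eq:
  assumes s: "Re s > 1"
  shows "((\<lambda>d. mangoldt d * cp d s) has_sum (Qz s + Rz s)) {1..}"
proof -
  define c where "c = (\<lambda>d. cp d s)"
  define L where "L = (\<lambda>n. of_real (ln (real (pr n))) :: complex)"
  have Ln: "norm (L n) = ln (real (pr n))" for n using pr_ge[of n] by (simp add: L_def)
  have sm1: "summable (\<lambda>n. norm (mangoldt (Suc n) * c (Suc n) :: complex))"
  proof (rule summable_comparison_test'[OF summ_lncp[of Suc, OF _ s]])
    fix n
    have "norm (mangoldt (Suc n) :: complex) \<le> ln (real (Suc n))"
    proof (cases "primepow (Suc n)")
      case True
      then have "aprimedivisor (Suc n) \<le> Suc n"
        by (intro aprimedivisor_le_nat) (use primepow_gt_Suc_0[OF True] in simp)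
      moreover have "aprimedivisor (Suc n) > 0" using True
        by (metis aprimedivisor_gt_0_nat primepow_gt_Suc_0)
      ultimately show ?thesis using True by (simp add: mangoldt_def)
    qed (simp add: mangoldt_def)
    moreover have "0 \<le> (mangoldt (Suc n) :: real)" by (rule mangoldt_nonneg)
    ultimately show "norm (norm (mangoldt (Suc n) * c (Suc n) :: complex))
        \<le> norm (of_real (ln (real (Suc n))) * cp (Suc n) s)"
      by (simp add: norm_mult c_def mult_right_mono abs_mult)
  qed simp
  obtain Lam where Lam: "((\<lambda>d. mangoldt d * c d) has_sum Lam) {1..}"
    using abs_summable_summable[OF suc_abs_summable(1)[OF sm1]] unfolding summable_on_def by blast
  have "((\<lambda>d. mangoldt d * c d) has_sum Lam) {d. primepow d}"
    using Lam
  proof (subst (asm) has_sum_cong_neutral[where g="\<lambda>d. mangoldt d * c d" and T="{d. primepow d}"])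
    show "\<And>x. x \<in> {d. primepow d} - {1..} \<Longrightarrow> mangoldt x * c x = 0"
      by (auto dest: primepow_gt_Suc_0)
    show "\<And>x. x \<in> {1..} - {d. primepow d} \<Longrightarrow> mangoldt x * c x = 0"
      by (auto simp: mangoldt_def)
  qed auto
  then have "((\<lambda>(p,k). mangoldt (p ^ Suc k) * c (p ^ Suc k)) has_sum Lam) (Collect prime \<times> UNIV)"
    using has_sum_reindex_bij_betw[OF bij_betw_primepows, of "\<lambda>d. mangoldt d * c d" Lam]
    by (simp add: case_prod_unfold)
  then have "((\<lambda>(p,k). of_real (ln (real p)) * c p ^ Suc k) has_sum Lam) (Collect prime \<times> UNIV)"
    by (rule has_sum_cong[THEN iffD1, rotated])
       (auto simp: mangoldt_primepow c_def cp_power simp del: power_Suc)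
  moreover have "((\<lambda>(n,k). L n * c (pr n) ^ Suc k) has_sum Lam) (UNIV \<times> UNIV) =
      ((\<lambda>(p,k). of_real (ln (real p)) * c p ^ Suc k) has_sum Lam) (Collect prime \<times> UNIV)"
  proof (rule has_sum_reindex_bij_witness[where j="\<lambda>(n,k). (pr n, k)" and i="\<lambda>(p,k). (inv_into UNIV pr p, k)"])
    have rp: "p \<in> range pr" if "prime p" for p using pr_ex[OF that] by auto
    show "\<And>a. a \<in> UNIV \<times> UNIV \<Longrightarrow> (case (case a of (n, k) \<Rightarrow> (pr n, k)) of (p, k) \<Rightarrow> (inv_into UNIV pr p, k)) = a"
      by (auto simp: inv_into_f_f[OF pr_inj])
    show "\<And>a. a \<in> UNIV \<times> UNIV \<Longrightarrow> (case a of (n, k) \<Rightarrow> (pr n, k)) \<in> Collect prime \<times> UNIV"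
      by (auto simp: prime_pr)
    show "\<And>b. b \<in> Collect prime \<times> UNIV \<Longrightarrow> (case (case b of (p, k) \<Rightarrow> (inv_into UNIV pr p, k)) of (n, k) \<Rightarrow> (pr n, k)) = b"
      by (auto simp: f_inv_into_f[OF rp])
    show "\<And>b. b \<in> Collect prime \<times> UNIV \<Longrightarrow> (case b of (p, k) \<Rightarrow> (inv_into UNIV pr p, k)) \<in> UNIV \<times> UNIV"
      by auto
    show "\<And>a. a \<in> UNIV \<times> UNIV \<Longrightarrow>
         (case (case a of (n, k) \<Rightarrow> (pr n, k)) of (p, k) \<Rightarrow> complex_of_real (ln (real p)) * c p ^ Suc k) =
         (case a of (n, k) \<Rightarrow> L n * c (pr n) ^ Suc k)"
      by (auto simp: L_def simp del: power_Suc)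
  qed simp
  ultimately have H: "((\<lambda>(n,k). L n * c (pr n) ^ Suc k) has_sum Lam) (UNIV \<times> UNIV)" by simp
  have inner: "((\<lambda>k. L n * c (pr n) ^ Suc k) has_sum (L n * (c (pr n) / (1 - c (pr n))))) UNIV" for n
  proof -
    define z where "z = c (pr n)"
    have z: "norm z < 1" unfolding z_def c_def using norm_cp_pr_lt1[of s n] s by simp
    have z1: "1 - z \<noteq> 0" using z by auto
    have e: "1 / (1 - z) - 1 = z / (1 - z)" using z1 by (simp add: field_simps)
    have "(\<lambda>k. z ^ Suc k) sums (1 / (1 - z) - 1)"
      using geometric_sums[OF z] by (subst sums_Suc_iff) auto
    then have "(\<lambda>k. z ^ Suc k) sums (z / (1 - z))" unfolding e .
    moreover have "summable (\<lambda>k. norm (z ^ Suc k))"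
      using z by (subst summable_Suc_iff) (auto simp: norm_power intro!: summable_geometric)
    ultimately have "((\<lambda>k. z ^ Suc k) has_sum (z / (1 - z))) UNIV"
      by (intro norm_summable_imp_has_sum)
    then show ?thesis unfolding z_def by (rule has_sum_cmult_right)
  qed
  have H2: "((\<lambda>n. L n * (c (pr n) / (1 - c (pr n)))) has_sum Lam) UNIV"
    by (rule has_sum_SigmaD[OF H]) (use inner in auto)
  then have S1: "(\<lambda>n. L n * (c (pr n) / (1 - c (pr n)))) sums Lam" by (rule has_sum_imp_sums)
  have S2: "(\<lambda>n. L n * c (pr n)) sums Qz s"
    unfolding Qz_def L_def c_def
    using summable_sums[OF summable_norm_cancel[OF summ_lncp[OF pr_ge1 s]]] .
  have "(\<lambda>n. L n * (c (pr n) / (1 - c (pr n))) - L n * c (pr n)) sums (Lam - Qz s)"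
    by (rule sums_diff[OF S1 S2])
  moreover have "L n * (c (pr n) / (1 - c (pr n))) - L n * c (pr n)
      = L n * c (pr n) ^ 2 / (1 - c (pr n))" for n
  proof -
    have "1 - c (pr n) \<noteq> 0" unfolding c_def using cp_pr_ne1[of s n] s by simp
    then show ?thesis by (simp add: field_simps power2_eq_square)
  qed
  ultimately have "(\<lambda>n. L n * c (pr n) ^ 2 / (1 - c (pr n))) sums (Lam - Qz s)" by simp
  then have "Rz s = Lam - Qz s" unfolding Rz_def L_def c_def by (rule sums_unique[symmetric])
  then show ?thesis using Lam by (simp add: c_def)
qed


lemma zeta0_deriv_series:
  assumes s: "Re s > 1"
  shows "(zeta0 has_field_derivative (\<Sum>n. - of_real (ln (real (Suc n))) * cp (Suc n) s)) (at s)"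
proof -
  have "((\<lambda>z. \<Sum>n. cp (Suc n) z) has_field_derivative (\<Sum>n. - of_real (ln (real (Suc n))) * cp (Suc n) s)) (at s)"
    using dser1[of Suc, OF _ s] by simp
  then show ?thesis
    by (rule has_field_derivative_transform_within_open[OF _ open_halfspace_Re_gt[of 1]])
       (use s zeta0_series in auto)
qed

lemma log_series_infsum:
  assumes s: "Re s > 1"
  shows "infsum (\<lambda>n. of_real (ln (real n)) * cp n s) {1..} = (\<Sum>n. of_real (ln (real (Suc n))) * cp (Suc n) s)"
  using suc_abs_summable(2)[of "\<lambda>n. of_real (ln (real n)) * cp n s"] summ_lncp[of Suc, OF _ s] by simp

lemma dirichlet_prod:
  assumes s: "Re s > 1"
  shows "((\<lambda>n. of_real (ln (real n)) * cp n s) has_sum ((Qz s + Rz s) * zeta0 s)) {1..}"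
proof -
  define a where "a d = mangoldt d * cp d s" for d
  define b where "b m = cp m s" for m
  have La: "(a has_sum (Qz s + Rz s)) {1..}" unfolding a_def by (rule Lam_eq[OF s])
  have a1: "(\<lambda>x. norm (a x)) summable_on {1..}"
    using La summable_on_iff_abs_summable_on_complex by (auto simp: summable_on_def)
  have b1: "(\<lambda>x. norm (b x)) summable_on {1..}"
    unfolding b_def by (rule suc_abs_summable(1)) (use summ_cp[of Suc, OF _ s] in simp)
  have ia: "infsum a {1..} = Qz s + Rz s" using La by (rule infsumI)
  have ib: "infsum b {1..} = zeta0 s"
    unfolding b_def using suc_abs_summable(2)[of "\<lambda>m. cp m s"] summ_cp[of Suc, OF _ s] zeta0_series[OF s]
    by simp
  have P: "((\<lambda>(x,y). a x * b y) has_sum ((Qz s + Rz s) * zeta0 s)) ({1..} \<times> {1..})"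
    using prod_has_sum[OF a1 b1] unfolding ia ib .
  define S where "S = Sigma {1::nat..} (\<lambda>n. {d. d dvd n})"
  have "((\<lambda>(n,d). mangoldt d * cp n s) has_sum ((Qz s + Rz s) * zeta0 s)) S =
        ((\<lambda>(x,y). a x * b y) has_sum ((Qz s + Rz s) * zeta0 s)) ({1..} \<times> {1..})"
  proof (rule has_sum_reindex_bij_witness[where j="\<lambda>(n,d). (d, n div d)" and i="\<lambda>(d,m). (d * m, d)"])
    show "\<And>x. x \<in> S \<Longrightarrow> (case (case x of (n, d) \<Rightarrow> (d, n div d)) of (d, m) \<Rightarrow> (d * m, d)) = x"
      by (auto simp: S_def)
    show "\<And>x. x \<in> S \<Longrightarrow> (case x of (n, d) \<Rightarrow> (d, n div d)) \<in> {1..} \<times> {1..}"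
      by (auto simp: S_def Suc_le_eq dvd_div_eq_0_iff dest: dvd_imp_le intro!: Nat.gr0I)
    show "\<And>y. y \<in> {1..} \<times> {1::nat..} \<Longrightarrow> (case (case y of (d, m) \<Rightarrow> (d * m, d)) of (n, d) \<Rightarrow> (d, n div d)) = y"
    proof -
      fix y :: "nat \<times> nat" assume "y \<in> {1..} \<times> {1..}"
      then obtain d0 m0 where y: "y = (d0, m0)" "d0 \<ge> 1" by auto
      then have "d0 * m0 div d0 = m0" by (intro nonzero_mult_div_cancel_left) auto
      then show "(case (case y of (d, m) \<Rightarrow> (d * m, d)) of (n, d) \<Rightarrow> (d, n div d)) = y"
        using y by simp
    qed
    show "\<And>y. y \<in> {1..} \<times> {1::nat..} \<Longrightarrow> (case y of (d, m) \<Rightarrow> (d * m, d)) \<in> S"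
      by (auto simp: S_def)
    show "\<And>x. x \<in> S \<Longrightarrow> (case (case x of (n, d) \<Rightarrow> (d, n div d)) of (x, y) \<Rightarrow> a x * b y) =
        (case x of (n, d) \<Rightarrow> mangoldt d * cp n s)"
      by (auto simp: S_def a_def b_def mult.assoc cp_mult[symmetric])
  qed simp
  with P have Q: "((\<lambda>(n,d). mangoldt d * cp n s) has_sum ((Qz s + Rz s) * zeta0 s)) S" by simp
  have inner: "((\<lambda>d. mangoldt d * cp n s) has_sum (of_real (ln (real n)) * cp n s)) {d. d dvd n}"
    if "n \<in> {1..}" for n
  proof -
    have n0: "n \<noteq> 0" using that by auto
    have "(\<Sum>d | d dvd n. mangoldt d * cp n s) = (\<Sum>d | d dvd n. mangoldt d) * cp n s"
      by (simp add: sum_distrib_right)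
    also have "\<dots> = of_real (ln (real n)) * cp n s" using mangoldt_sum[OF n0, where 'a=complex] by simp
    finally show ?thesis
      using n0 by (intro has_sum_finiteI) auto
  qed
  show ?thesis
    using has_sum_SigmaD[OF Q[unfolded S_def]] inner by (simp add: case_prod_unfold)
qed

lemma zeta0_deriv:
  assumes s: "Re s > 1"
  shows "(zeta0 has_field_derivative (- (Qz s + Rz s) * zeta0 s)) (at s)"
proof -
  have "(\<Sum>n. - of_real (ln (real (Suc n))) * cp (Suc n) s) = - (\<Sum>n. of_real (ln (real (Suc n))) * cp (Suc n) s)"
    using summ_lncp[of Suc, OF _ s] by (subst suminf_minus[symmetric]) (auto intro: summable_norm_cancel)
  also have "(\<Sum>n. of_real (ln (real (Suc n))) * cp (Suc n) s) = (Qz s + Rz s) * zeta0 s"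
    using log_series_infsum[OF s] infsumI[OF dirichlet_prod[OF s]] by simp
  finally have e: "(\<Sum>n. - of_real (ln (real (Suc n))) * cp (Suc n) s) = - (Qz s + Rz s) * zeta0 s"
    by (simp add: algebra_simps)
  show ?thesis using zeta0_deriv_series[OF s] unfolding e .
qed

lemma Rz_holo: "Rz holomorphic_on {s. Re s > 1/2}"
proof -
  define f where "f n s = of_real (ln (real (pr n))) * cp (pr n) s ^ 2 / (1 - cp (pr n) s)" for n s
  have S: "open {s. Re s > 1/2}" by (rule open_halfspace_Re_gt)
  have hol: "f n holomorphic_on {s. Re s > 1/2}" for n
  proof -
    have "\<And>s. s \<in> {s. Re s > 1/2} \<Longrightarrow> 1 - cp (pr n) s \<noteq> 0" using cp_pr_ne1 by auto
    then show ?thesis unfolding f_def cp_def by (intro holomorphic_intros) auto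
  qed
  have bd: "\<exists>d h. 0 < d \<and> summable h \<and> (\<forall>n. \<forall>y\<in>ball x d \<inter> {s. Re s > 1/2}. norm (f n y) \<le> h n)"
    if "x \<in> {s. Re s > 1/2}" for x
  proof -
    have x: "Re x > 1/2" using that by simp
    define a where "a = (Re x + 1/2) / 2"
    define d where "d = Re x - a"
    have a: "a > 1/2" "2 * a > 1" and d: "d > 0" using x by (auto simp: a_def d_def)
    define \<kappa> where "\<kappa> = 1 - 2 powr (- a)"
    have \<kappa>: "\<kappa> > 0" unfolding \<kappa>_def using a by (simp add: powr_less_one)
    define h where "h n = ln (real (pr n)) * real (pr n) powr (- (2 * a)) / \<kappa>" for n
    have sh: "summable h" unfolding h_def
      by (intro summable_divide summ_logpow[OF pr_ge1] a)
    have "norm (f n y) \<le> h n" if y: "y \<in> ball x d \<inter> {s. Re s > 1/2}" for n y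
    proof -
      have "\<bar>Re x - Re y\<bar> \<le> norm (x - y)" using abs_Re_le_cmod[of "x - y"] by simp
      then have ry: "Re y \<ge> a" using y by (auto simp: d_def dist_norm)
      define p where "p = real (pr n)"
      have p2: "p \<ge> 2" using pr_ge[of n] by (simp add: p_def)
      have c1: "norm (cp (pr n) y) \<le> p powr (- a)"
        unfolding norm_cp p_def[symmetric] using ry p2 by (intro powr_mono) auto
      have c2: "p powr (- a) \<le> 2 powr (- a)" using p2 a by (intro powr_mono2') auto
      have den: "norm (1 - cp (pr n) y) \<ge> \<kappa>"
      proof -
        have "norm (1 - cp (pr n) y) \<ge> 1 - norm (cp (pr n) y)"
          using norm_triangle_ineq2[of 1 "cp (pr n) y"] by simp
        then show ?thesis using c1 c2 by (simp add: \<kappa>_def)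
      qed
      have num: "norm (of_real (ln p) * cp (pr n) y ^ 2) \<le> ln p * p powr (- (2 * a))"
      proof -
        have "norm (cp (pr n) y ^ 2) = p powr (- Re y) * p powr (- Re y)"
          by (simp add: norm_mult norm_cp p_def power2_eq_square)
        also have "\<dots> \<le> p powr (- a) * p powr (- a)"
          using c1 by (intro mult_mono) (auto simp: norm_cp p_def)
        also have "\<dots> = p powr (- (2 * a))" by (simp add: powr_add[symmetric])
        finally show ?thesis using p2 by (simp add: norm_mult mult_left_mono)
      qed
      have "norm (f n y) = norm (of_real (ln p) * cp (pr n) y ^ 2) / norm (1 - cp (pr n) y)"
        by (simp add: f_def p_def norm_divide)
      also have "\<dots> \<le> (ln p * p powr (- (2 * a))) / \<kappa>"
        using num den \<kappa> p2 by (intro frac_le) auto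
      finally show ?thesis by (simp add: h_def p_def)
    qed
    then show ?thesis using d sh by blast
  qed
  show ?thesis using holo_series_local(1)[OF S hol bd] unfolding f_def Rz_def[abs_def] .
qed


definition La :: "complex \<Rightarrow> nat \<Rightarrow> complex" where
  "La s m = of_real (ln (real m)) * cp m s"

definition beta :: "real \<Rightarrow> nat \<Rightarrow> real" where
  "beta R m = (1 + R + R * ln (real m)) * real m powr (- 3 / 2)"

lemma La_diff_bound:
  assumes m: "m \<ge> 1" and y: "Re y \<ge> 1/2" and R: "norm y \<le> R"
  shows "norm (La y m - La y (Suc m)) \<le> beta R m"
proof -
  define mr where "mr = real m"
  have m1: "mr \<ge> 1" using m by (simp add: mr_def)
  define w :: complex where "w = of_real mr"
  define z :: complex where "z = of_real (mr + 1)"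
  define F :: "nat \<Rightarrow> complex \<Rightarrow> complex" where
    "F i = (if i = 0 then (\<lambda>u. Ln u * u powr (- y))
            else (\<lambda>u. (1 / u) * u powr (- y) + Ln u * (- y * u powr (- y - 1))))" for i
  define S where "S = closed_segment w z"
  have memS: "\<exists>t. u = of_real t \<and> mr \<le> t \<and> t \<le> mr + 1" if "u \<in> S" for u
  proof -
    have "u \<in> of_real ` closed_segment mr (mr + 1)"
      using that unfolding S_def w_def z_def closed_segment_of_real .
    then show ?thesis by (auto simp: closed_segment_eq_real_ivl)
  qed
  have der: "(F i has_field_derivative F (Suc i) u) (at u within S)"
    if uS: "u \<in> S" and i0: "i \<le> 0" for i u
  proof -
    obtain t where t: "u = of_real t" "mr \<le> t" "t \<le> mr + 1" using memS[OF uS] by blast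
    have nz: "u \<notin> \<real>\<^sub>\<le>\<^sub>0" using t m1 by (auto simp: nonpos_Reals_def)
    have "((\<lambda>u. Ln u * u powr (- y)) has_field_derivative
            (inverse u * u powr (- y) + Ln u * (- y * u powr (- y - 1)))) (at u)"
    proof -
      have d1: "(Ln has_field_derivative inverse u) (at u)" by (rule has_field_derivative_Ln[OF nz])
      have d2: "((\<lambda>u. u powr (- y)) has_field_derivative (- y) * u powr (- y - 1)) (at u)"
        by (rule has_field_derivative_powr[OF nz])
      have "((\<lambda>u. Ln u * u powr (- y)) has_field_derivative
              inverse u * u powr (- y) + ((- y) * u powr (- y - 1)) * Ln u) (at u)"
        by (rule DERIV_mult[OF d1 d2])
      then show ?thesis by (simp add: mult.commute)
    qed
    then show ?thesis using i0 by (simp add: F_def has_field_derivative_at_within divide_inverse)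
  qed
  have B: "norm (F (Suc 0) u) \<le> beta R m" if uS: "u \<in> S" for u
  proof -
    obtain t where t: "u = of_real t" "mr \<le> t" "t \<le> mr + 1" using memS[OF uS] by blast
    have t0: "t > 0" using t m1 by simp
    have p1: "t powr (- Re y - 1) \<le> mr powr (- 3 / 2)"
    proof -
      have "t powr (- Re y - 1) \<le> t powr (- 3 / 2)" using t m1 y by (intro powr_mono) auto
      also have "\<dots> \<le> mr powr (- 3 / 2)" using t m1 by (intro powr_mono2') auto
      finally show ?thesis .
    qed
    have n1: "norm ((1 / u) * u powr (- y)) = t powr (- Re y - 1)"
      using t0 by (simp add: t norm_mult norm_divide norm_powr_real_powr powr_diff)
    have lnt: "ln t \<le> 1 + ln mr"
    proof -
      have "ln t \<le> ln (2 * mr)" using t m1 by (intro ln_mono) auto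
      also have "\<dots> = ln 2 + ln mr" using m1 by (simp add: ln_mult)
      also have "ln 2 \<le> (1::real)" using ln_le_minus_one[of 2] by simp
      finally show ?thesis by simp
    qed
    have lt0: "ln t \<ge> 0" using t m1 by simp
    have n2: "norm (Ln u * (- y * u powr (- y - 1))) = ln t * norm y * t powr (- Re y - 1)"
      using t0 lt0 by (simp add: t norm_mult norm_powr_real_powr Ln_of_real)
    have Fe: "F (Suc 0) u = (1 / u) * u powr (- y) + Ln u * (- y * u powr (- y - 1))"
      by (simp add: F_def)
    have "norm (F (Suc 0) u) \<le> norm ((1 / u) * u powr (- y)) + norm (Ln u * (- y * u powr (- y - 1)))"
      unfolding Fe by (rule norm_triangle_ineq)
    also have "\<dots> = t powr (- Re y - 1) + ln t * norm y * t powr (- Re y - 1)"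
      by (simp only: n1 n2)
    also have "\<dots> \<le> mr powr (- 3 / 2) + (1 + ln mr) * R * mr powr (- 3 / 2)"
    proof -
      have R0: "R \<ge> 0" using R norm_ge_zero[of y] by linarith
      have lm: "ln mr \<ge> 0" using m1 by simp
      show ?thesis using p1 lnt R lt0 R0 lm by (intro add_mono mult_mono) auto
    qed
    also have "\<dots> = beta R m" by (simp add: beta_def mr_def algebra_simps)
    finally show ?thesis .
  qed
  have wS: "w \<in> S" and zS: "z \<in> S" by (auto simp: S_def)
  have T: "norm (F 0 z - (\<Sum>i\<le>0. F i w * (z - w) ^ i / fact i)) \<le> beta R m * norm (z - w) ^ Suc 0 / fact 0"
    by (rule complex_Taylor[OF convex_closed_segment[of w z, folded S_def] der B wS zS])
  have zw: "z - w = 1" by (simp add: z_def w_def)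
  have "La y m - La y (Suc m) = - (F 0 z - (\<Sum>i\<le>0. F i w * (z - w) ^ i / fact i))"
  proof -
    have e1: "(of_nat m :: complex) = w" by (simp add: w_def mr_def)
    have e2: "(of_nat (Suc m) :: complex) = z" by (simp add: z_def mr_def)
    have "La y m = Ln w * w powr (- y)" unfolding La_def cp_def e1
      using m1 by (simp add: w_def Ln_of_real mr_def)
    moreover have "La y (Suc m) = Ln z * z powr (- y)"
    proof -
      have "Ln z = of_real (ln (mr + 1))" unfolding z_def by (rule Ln_of_real) (use m1 in simp)
      moreover have "real (Suc m) = mr + 1" by (simp add: mr_def)
      ultimately show ?thesis unfolding La_def cp_def e2 by simp
    qed
    ultimately show ?thesis by (simp add: F_def)
  qed
  then have "norm (La y m - La y (Suc m)) = norm (F 0 z - (\<Sum>i\<le>0. F i w * (z - w) ^ i / fact i))"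
    by (simp only: norm_minus_cancel)
  with T zw show ?thesis by simp
qed

lemma La_tele:
  assumes "u \<le> v"
  shows "norm (La y u - La y v) \<le> (\<Sum>m\<in>{u..<v}. norm (La y m - La y (Suc m)))"
  using assms
proof (induction v rule: dec_induct)
  case base then show ?case by simp
next
  case (step v)
  have "norm (La y u - La y (Suc v)) \<le> norm (La y u - La y v) + norm (La y v - La y (Suc v))"
    using norm_triangle_ineq[of "La y u - La y v" "La y v - La y (Suc v)"] by simp
  also have "\<dots> \<le> (\<Sum>m\<in>{u..<v}. norm (La y m - La y (Suc m))) + norm (La y v - La y (Suc v))"
    using step.IH by simp
  also have "\<dots> = (\<Sum>m\<in>{u..<Suc v}. norm (La y m - La y (Suc m)))"
    using step.hyps by simp
  finally show ?case .
qed

lemma beta_nonneg: "R \<ge> 0 \<Longrightarrow> beta R m \<ge> 0"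
  unfolding beta_def by (cases "m = 0") (auto intro!: mult_nonneg_nonneg add_nonneg_nonneg)

lemma beta_summable: "summable (beta R)"
proof -
  have "summable (\<lambda>n. beta R (Suc n))"
  proof -
    have "summable (\<lambda>n. (1 + R) * real (Suc n) powr (- (3/2)) + R * (ln (real (Suc n)) * real (Suc n) powr (- (3/2))))"
      by (intro summable_add summable_mult summ_pow[of Suc] summ_logpow[of Suc]) auto
    then show ?thesis by (simp add: beta_def algebra_simps)
  qed
  then show ?thesis by (subst summable_Suc_iff[symmetric])
qed


lemma sum_concat_mono:
  fixes c :: "nat \<Rightarrow> nat" and f :: "nat \<Rightarrow> real"
  assumes "mono c"
  shows "(\<Sum>j\<le>N. (\<Sum>m\<in>{c j..<c (Suc j)}. f m)) = (\<Sum>m\<in>{c 0..<c (Suc N)}. f m)"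
proof (induction N)
  case 0 then show ?case by simp
next
  case (Suc N)
  have le1: "c 0 \<le> c (Suc N)" and le2: "c (Suc N) \<le> c (Suc (Suc N))"
    using assms by (auto simp: mono_def)
  have "(\<Sum>j\<le>Suc N. (\<Sum>m\<in>{c j..<c (Suc j)}. f m))
      = (\<Sum>m\<in>{c 0..<c (Suc N)}. f m) + (\<Sum>m\<in>{c (Suc N)..<c (Suc (Suc N))}. f m)"
    using Suc by simp
  also have "\<dots> = (\<Sum>m\<in>{c 0..<c (Suc (Suc N))}. f m)"
    by (rule sum.atLeastLessThan_concat[OF le1 le2])
  finally show ?case .
qed

lemma La_holo: "(\<lambda>s. La s m) holomorphic_on S"
  unfolding La_def cp_def by (intro holomorphic_intros)

lemma arith_T:
  assumes r: "r \<ge> 1" and r0: "r0 \<ge> 1"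
  shows "\<exists>T. T holomorphic_on {s. Re s > 1/2} \<and>
           (\<forall>s. Re s > 1 \<longrightarrow> of_nat r * (\<Sum>j. La s (qs r r0 j)) = Qz s + T s)"
proof -
  define b where "b j = r0 - 1 + j * r" for j
  define D where "D s j = (\<Sum>i<r. (La s (pr (b j)) - La s (pr (b j + i))))" for s j
  define T where "T s = (\<Sum>j. D s j) - (\<Sum>n<r0 - 1. La s (pr n))" for s
  define c where "c j = pr (b j)" for j
  have bS: "b (Suc j) = b j + r" for j by (simp add: b_def)
  have cmono: "mono c" unfolding mono_def c_def b_def
    by (auto intro: mult_le_mono1)
  have Sop: "open {s. Re s > 1/2}" by (rule open_halfspace_Re_gt)
  have Dhol: "(\<lambda>s. D s j) holomorphic_on {s. Re s > 1/2}" for j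
    unfolding D_def by (intro holomorphic_intros La_holo)
  have bd: "\<exists>d h. 0 < d \<and> summable h \<and> (\<forall>j. \<forall>y\<in>ball x d \<inter> {s. Re s > 1/2}. norm (D y j) \<le> h j)"
    if "x \<in> {s. Re s > 1/2}" for x
  proof -
    define R where "R = norm x + 1"
    have R0: "R \<ge> 0" by (simp add: R_def)
    define h where "h j = real r * (\<Sum>m\<in>{c j..<c (Suc j)}. beta R m)" for j
    have hn: "h j \<ge> 0" for j unfolding h_def using beta_nonneg[OF R0]
      by (intro mult_nonneg_nonneg sum_nonneg) auto
    have "summable h"
    proof (rule bounded_imp_summable[OF hn])
      fix N
      have "(\<Sum>j\<le>N. h j) = real r * (\<Sum>m\<in>{c 0..<c (Suc N)}. beta R m)"
        unfolding h_def by (simp add: sum_distrib_left[symmetric] sum_concat_mono[OF cmono])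
      also have "\<dots> \<le> real r * suminf (beta R)"
        by (intro mult_left_mono sum_le_suminf beta_summable) (use beta_nonneg[OF R0] in auto)
      finally show "(\<Sum>j\<le>N. h j) \<le> real r * suminf (beta R)" .
    qed
    moreover have "norm (D y j) \<le> h j" if y: "y \<in> ball x 1 \<inter> {s. Re s > 1/2}" for j y
    proof -
      have ny: "norm y \<le> R" using y norm_triangle_ineq3[of x y]
        by (auto simp: R_def dist_norm norm_minus_commute)
      have ry: "Re y \<ge> 1/2" using y by simp
      have each: "norm (La y (pr (b j)) - La y (pr (b j + i))) \<le> (\<Sum>m\<in>{c j..<c (Suc j)}. beta R m)"
        if i: "i < r" for i
      proof -
        have le: "pr (b j) \<le> pr (b j + i)" by simp
        have le2: "pr (b j + i) \<le> c (Suc j)" unfolding c_def bS using i by simp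
        have "norm (La y (pr (b j)) - La y (pr (b j + i)))
            \<le> (\<Sum>m\<in>{pr (b j)..<pr (b j + i)}. norm (La y m - La y (Suc m)))"
          by (rule La_tele[OF le])
        also have "\<dots> \<le> (\<Sum>m\<in>{pr (b j)..<pr (b j + i)}. beta R m)"
        proof (rule sum_mono)
          fix m assume "m \<in> {pr (b j)..<pr (b j + i)}"
          then have "m \<ge> 1" using pr_ge[of "b j"] by auto
          then show "norm (La y m - La y (Suc m)) \<le> beta R m" by (rule La_diff_bound[OF _ ry ny])
        qed
        also have "\<dots> \<le> (\<Sum>m\<in>{c j..<c (Suc j)}. beta R m)"
          by (rule sum_mono2) (use le2 beta_nonneg[OF R0] in \<open>auto simp: c_def\<close>)
        finally show ?thesis .
      qed
      have "norm (D y j) \<le> (\<Sum>i<r. norm (La y (pr (b j)) - La y (pr (b j + i))))"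
        unfolding D_def by (rule norm_sum)
      also have "\<dots> \<le> (\<Sum>i<r. (\<Sum>m\<in>{c j..<c (Suc j)}. beta R m))"
        by (rule sum_mono) (use each in auto)
      also have "\<dots> = h j" by (simp add: h_def)
      finally show ?thesis .
    qed
    ultimately show ?thesis by (intro exI[of _ 1] exI[of _ h]) auto
  qed
  have Thol: "T holomorphic_on {s. Re s > 1/2}"
  proof -
    have "(\<lambda>s. \<Sum>j. D s j) holomorphic_on {s. Re s > 1/2}"
      by (rule holo_series_local(1)[OF Sop Dhol bd])
    moreover have "(\<lambda>s. \<Sum>n<r0 - 1. La s (pr n)) holomorphic_on {s. Re s > 1/2}"
      by (intro holomorphic_intros La_holo)
    ultimately show ?thesis unfolding T_def[abs_def] by (rule holomorphic_on_diff)
  qed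
  have eq: "of_nat r * (\<Sum>j. La s (qs r r0 j)) = Qz s + T s" if s: "Re s > 1" for s
  proof -
    define a where "a n = La s (pr n)" for n
    define F where "F = (\<Sum>n<r0 - 1. a n)"
    have S0: "a sums Qz s"
      unfolding a_def La_def Qz_def using summable_sums[OF summable_norm_cancel[OF summ_lncp[OF pr_ge1 s]]] .
    have S1: "(\<lambda>n. a (n + (r0 - 1))) sums (Qz s - F)"
      using S0 by (subst sums_iff_shift) (simp add: F_def)
    have S2: "(\<lambda>j. \<Sum>i\<in>{j * r..<j * r + r}. a (i + (r0 - 1))) sums (Qz s - F)"
      by (rule sums_group[OF S1]) (use r in simp)
    have grp: "(\<Sum>i\<in>{j * r..<j * r + r}. a (i + (r0 - 1))) = (\<Sum>i<r. a (b j + i))" for j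
    proof -
      have "(\<Sum>i\<in>{j * r..<j * r + r}. a (i + (r0 - 1))) = (\<Sum>i\<in>{0 + j * r..<r + j * r}. a (i + (r0 - 1)))"
        by (simp add: add.commute)
      also have "\<dots> = (\<Sum>i\<in>{0..<r}. a (i + j * r + (r0 - 1)))"
        by (rule sum.shift_bounds_nat_ivl)
      also have "\<dots> = (\<Sum>i<r. a (b j + i))" by (simp add: b_def atLeast0LessThan algebra_simps)
      finally show ?thesis .
    qed
    have S3: "(\<lambda>j. a (b j)) sums (\<Sum>j. La s (qs r r0 j))"
      unfolding a_def b_def
      using summable_sums[OF summable_norm_cancel[OF summ_lncp[OF qs_ge[OF r] s]]]
      by (simp add: La_def qs_def)
    have "(\<lambda>j. of_nat r * a (b j) - (\<Sum>i<r. a (b j + i))) sums (of_nat r * (\<Sum>j. La s (qs r r0 j)) - (Qz s - F))"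
      by (intro sums_diff sums_mult S3) (use S2 grp in simp)
    moreover have "of_nat r * a (b j) - (\<Sum>i<r. a (b j + i)) = D s j" for j
      by (simp add: D_def a_def sum_subtractf)
    ultimately have "(\<lambda>j. D s j) sums (of_nat r * (\<Sum>j. La s (qs r r0 j)) - (Qz s - F))" by simp
    then have "(\<Sum>j. D s j) = of_nat r * (\<Sum>j. La s (qs r r0 j)) - (Qz s - F)" by (rule sums_unique[symmetric])
    then show ?thesis by (simp add: T_def F_def a_def)
  qed
  show ?thesis using Thol eq by blast
qed


definition Gf :: "complex \<Rightarrow> complex \<Rightarrow> complex" where
  "Gf s z = - (z powr (- s) * Ln z) / s - z powr (- s) / s ^ 2"

definition phi :: "complex \<Rightarrow> real \<Rightarrow> complex" where
  "phi s t = of_real (ln t) / of_real t powr (s + 1)"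

lemma Gf_deriv:
  assumes z: "z \<notin> \<real>\<^sub>\<le>\<^sub>0" and s: "s \<noteq> 0"
  shows "(Gf s has_field_derivative (Ln z / z powr (s + 1))) (at z)"
proof -
  have z0: "z \<noteq> 0" using z by auto
  define A where "A = z powr (- s)"
  have A0: "A \<noteq> 0" using z0 by (simp add: A_def powr_def)
  have e1: "z powr (- s - 1) = A / z" unfolding A_def by (simp add: powr_diff)
  have e2: "z powr (s + 1) = z / A"
  proof -
    have "z powr (s + 1) = z powr s * z" by (simp add: powr_add)
    also have "z powr s = inverse A" unfolding A_def by (simp add: powr_minus)
    finally show ?thesis by (simp add: field_simps)
  qed
  have d1: "((\<lambda>z. z powr (- s)) has_field_derivative (- s) * z powr (- s - 1)) (at z)"
    by (rule has_field_derivative_powr[OF z])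
  have d2: "(Ln has_field_derivative inverse z) (at z)" by (rule has_field_derivative_Ln[OF z])
  have d3: "((\<lambda>z. z powr (- s) * Ln z) has_field_derivative
              (- s) * z powr (- s - 1) * Ln z + inverse z * z powr (- s)) (at z)"
    by (rule DERIV_mult[OF d1 d2])
  have d4: "((\<lambda>z. - (z powr (- s) * Ln z) / s) has_field_derivative
              - ((- s) * z powr (- s - 1) * Ln z + inverse z * z powr (- s)) / s) (at z)"
    by (rule DERIV_cdivide[OF DERIV_minus[OF d3]])
  have d5: "((\<lambda>z. z powr (- s) / s ^ 2) has_field_derivative (- s) * z powr (- s - 1) / s ^ 2) (at z)"
    by (rule DERIV_cdivide[OF d1])
  have "(Gf s has_field_derivative
      (- ((- s) * z powr (- s - 1) * Ln z + inverse z * z powr (- s)) / s - (- s) * z powr (- s - 1) / s ^ 2)) (at z)"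
    unfolding Gf_def[abs_def] by (rule DERIV_diff[OF d4 d5])
  also have "(- ((- s) * z powr (- s - 1) * Ln z + inverse z * z powr (- s)) / s - (- s) * z powr (- s - 1) / s ^ 2)
      = Ln z / z powr (s + 1)"
    unfolding e1 e2 A_def[symmetric] using s z0 A0 by (simp add: field_simps power2_eq_square)
  finally show ?thesis .
qed

lemma F_vderiv:
  assumes t: "t > 0" and s: "s \<noteq> 0"
  shows "((\<lambda>t. Gf s (of_real t)) has_vector_derivative phi s t) (at t within X)"
proof -
  have z: "(of_real t :: complex) \<notin> \<real>\<^sub>\<le>\<^sub>0" using t by (auto simp: nonpos_Reals_def)
  have "Ln (of_real t) / of_real t powr (s + 1) = phi s t"
    unfolding phi_def using t by (simp add: Ln_of_real)
  then show ?thesis using has_vector_derivative_real_field[OF Gf_deriv[OF z s]] by simp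
qed

lemma phi_integral:
  assumes a: "0 < a" "a \<le> b" and s: "s \<noteq> 0"
  shows "(phi s has_integral (Gf s (of_real b) - Gf s (of_real a))) {a..b}"
  by (rule fundamental_theorem_of_calculus[OF a(2)]) (use a s in \<open>auto intro!: F_vderiv\<close>)

definition pp :: "nat \<Rightarrow> nat" where "pp k = prime_pi (real k)"

lemma prime_pi_const:
  assumes "real k \<le> t" "t < real k + 1"
  shows "prime_pi t = pp k"
proof -
  have "{p::nat. prime p \<and> real p \<le> t} = {p. prime p \<and> real p \<le> real k}"
  proof (intro Collect_cong conj_cong refl iffI)
    fix p :: nat assume "real p \<le> t"
    then have "real p < real k + 1" using assms by linarith
    then have "real p < real (k + 1)" by simp
    then have "p < k + 1" by (simp only: of_nat_less_iff)
    then show "real p \<le> real k" by simp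
  next
    fix p :: nat assume "real p \<le> real k" then show "real p \<le> t" using assms by linarith
  qed
  then show ?thesis by (simp add: prime_pi_def pp_def)
qed

lemma pp_alt: "pp k = card {p. prime p \<and> p \<le> k}"
  unfolding pp_def prime_pi_def of_nat_le_iff ..

lemma pp_Suc: "pp (Suc k) = pp k + (if prime (Suc k) then 1 else 0)"
proof -
  have fin: "finite {p::nat. prime p \<and> p \<le> k}"
    by (rule finite_subset[of _ "{..k}"]) auto
  have "{p::nat. prime p \<and> p \<le> Suc k} =
        {p. prime p \<and> p \<le> k} \<union> (if prime (Suc k) then {Suc k} else {})"
    by (auto simp: le_Suc_eq)
  then show ?thesis using fin by (simp add: pp_alt)
qed

lemma prime_pi_le: assumes "t \<ge> 0" shows "real (prime_pi t) \<le> t"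
proof -
  have sub: "{p::nat. prime p \<and> real p \<le> t} \<subseteq> {1..nat \<lfloor>t\<rfloor>}"
  proof
    fix p assume p: "p \<in> {p::nat. prime p \<and> real p \<le> t}"
    then have "p \<ge> 1" using prime_ge_1_nat by auto
    moreover have "p \<le> nat \<lfloor>t\<rfloor>" using p by (auto simp: le_nat_iff le_floor_iff)
    ultimately show "p \<in> {1..nat \<lfloor>t\<rfloor>}" by auto
  qed
  have "prime_pi t \<le> card {1..nat \<lfloor>t\<rfloor>}" unfolding prime_pi_def by (rule card_mono[OF _ sub]) auto
  then have "real (prime_pi t) \<le> real (nat \<lfloor>t\<rfloor>)" by simp
  also have "\<dots> \<le> t" using assms by linarith
  finally show ?thesis .
qed

definition fint :: "complex \<Rightarrow> real \<Rightarrow> complex" where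
  "fint s t = of_real (real (prime_pi t) * ln t) / of_real t powr (s + 1)"

lemma fint_piece:
  assumes k: "k \<ge> 2" and s: "s \<noteq> 0"
  shows "(fint s has_integral (of_nat (pp k) * (Gf s (of_real (real k + 1)) - Gf s (of_real (real k)))))
           {real k..real k + 1}"
proof -
  have "((\<lambda>t. of_nat (pp k) * phi s t) has_integral
          (of_nat (pp k) * (Gf s (of_real (real k + 1)) - Gf s (of_real (real k))))) {real k..real k + 1}"
    by (intro has_integral_mult_right phi_integral) (use k s in auto)
  note P = this
  show ?thesis
  proof (rule has_integral_spike_finite[of "{real k + 1}" "{real k..real k + 1}" "fint s" "\<lambda>t. of_nat (pp k) * phi s t", OF _ _ P])
    fix t assume t: "t \<in> {real k..real k + 1} - {real k + 1}"
    then have "prime_pi t = pp k" by (intro prime_pi_const) auto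
    then show "fint s t = of_nat (pp k) * phi s t" by (simp add: fint_def phi_def)
  qed simp
qed

definition Jf :: "complex \<Rightarrow> nat \<Rightarrow> complex" where
  "Jf s N = (\<Sum>k\<in>{2..<N}. of_nat (pp k) * (Gf s (of_real (real k + 1)) - Gf s (of_real (real k))))"

lemma fint_J:
  assumes N: "N \<ge> 2" and s: "s \<noteq> 0"
  shows "(fint s has_integral Jf s N) {2..real N}"
  using N
proof (induction N rule: dec_induct)
  case base then show ?case by (simp add: Jf_def has_integral_refl)
next
  case (step N)
  have "(fint s has_integral (Jf s N + of_nat (pp N) * (Gf s (of_real (real N + 1)) - Gf s (of_real (real N)))))
      {2..real N + 1}"
    by (rule has_integral_combine[OF _ _ step.IH fint_piece[OF step.hyps(1) s]]) (use step.hyps in auto)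
  moreover have "Jf s (Suc N) = Jf s N + of_nat (pp N) * (Gf s (of_real (real N + 1)) - Gf s (of_real (real N)))"
    unfolding Jf_def using step.hyps by simp
  ultimately show ?case by (simp add: add.commute)
qed

lemma Jf_formula:
  assumes N: "N \<ge> 2"
  shows "Jf s N = of_nat (pp (N - 1)) * Gf s (of_real (real N))
                  - (\<Sum>k<N. if prime k then Gf s (of_real (real k)) else 0)"
  using N
proof (induction N rule: dec_induct)
  case base
  have "{p::nat. prime p \<and> p \<le> 1} = {}" by (auto dest: prime_gt_1_nat)
  then have "pp 1 = 0" unfolding pp_alt by simp
  moreover have "(\<Sum>k<2. if prime k then Gf s (of_real (real k)) else 0) = 0"
    by (simp add: numeral_2_eq_2 lessThan_Suc)
  ultimately show ?case by (simp add: Jf_def)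
next
  case (step N)
  define P where "P k = (if prime k then Gf s (of_real (real k)) else 0)" for k
  define G where "G k = Gf s (of_real (real k))" for k
  have pN: "of_nat (pp N) = (of_nat (pp (N - 1)) :: complex) + (if prime N then 1 else 0)"
    using pp_Suc[of "N - 1"] step.hyps by simp
  have G1: "Gf s (of_real (real N + 1)) = G (Suc N)" by (simp add: G_def add.commute)
  have "Jf s (Suc N) = Jf s N + of_nat (pp N) * (Gf s (of_real (real N + 1)) - Gf s (of_real (real N)))"
    unfolding Jf_def using step.hyps by simp
  also have "\<dots> = (of_nat (pp (N - 1)) * G N - (\<Sum>k<N. P k)) + of_nat (pp N) * (G (Suc N) - G N)"
    unfolding step.IH G1 by (simp add: G_def P_def)
  also have "\<dots> = of_nat (pp N) * G (Suc N) - ((\<Sum>k<N. P k) + P N)"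
    unfolding pN by (simp add: P_def G_def algebra_simps)
  also have "\<dots> = of_nat (pp (Suc N - 1)) * G (Suc N) - (\<Sum>k<Suc N. P k)" by simp
  finally show ?case by (simp add: G_def P_def)
qed


lemma norm_Gf:
  assumes t: "t \<ge> 1" and s: "s \<noteq> 0"
  shows "norm (Gf s (of_real t)) \<le> t powr (- Re s) * ln t / norm s + t powr (- Re s) / norm s ^ 2"
proof -
  have t0: "t > 0" using t by simp
  have n1: "norm ((of_real t :: complex) powr (- s)) = t powr (- Re s)"
    using t0 by (simp add: norm_powr_real_powr)
  have n2: "norm (Ln (of_real t :: complex)) = ln t" using t by (simp add: Ln_of_real)
  have "norm (Gf s (of_real t)) \<le> norm (- ((of_real t :: complex) powr (- s) * Ln (of_real t)) / s)
          + norm ((of_real t :: complex) powr (- s) / s ^ 2)"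
    unfolding Gf_def by (rule norm_triangle_ineq4)
  also have "\<dots> = t powr (- Re s) * ln t / norm s + t powr (- Re s) / norm s ^ 2"
    by (simp add: norm_divide norm_mult n1 n2 norm_power)
  finally show ?thesis .
qed

lemma boundary_lim:
  assumes s: "Re s > 1"
  shows "(\<lambda>N. of_nat (pp (N - 1)) * Gf s (of_real (real N))) \<longlonglongrightarrow> 0"
proof -
  have s0: "s \<noteq> 0" using s by auto
  define e where "e = (Re s - 1) / 2"
  have e: "e > 0" using s by (simp add: e_def)
  define g where "g N = real N powr (1 - Re s + e) / (e * norm s) + real N powr (1 - Re s) / norm s ^ 2" for N
  have lim: "filterlim (\<lambda>N. real N) at_top sequentially" by (rule filterlim_real_sequentially)
  have g0: "g \<longlonglongrightarrow> 0"
  proof -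
    have ex: "1 - Re s + e < 0" using s by (simp add: e_def field_simps)
    have a: "(\<lambda>N. real N powr (1 - Re s + e)) \<longlonglongrightarrow> 0"
      using tendsto_neg_powr[OF ex lim] .
    have b: "(\<lambda>N. real N powr (1 - Re s)) \<longlonglongrightarrow> 0"
      using tendsto_neg_powr[of "1 - Re s", OF _ lim] s by simp
    have "g \<longlonglongrightarrow> 0 / (e * norm s) + 0 / norm s ^ 2"
      unfolding g_def by (intro tendsto_add tendsto_divide a b tendsto_const) (use e s0 in auto)
    then show ?thesis by simp
  qed
  show ?thesis
  proof (rule Lim_null_comparison[OF _ g0])
    show "\<forall>\<^sub>F N in sequentially. norm (of_nat (pp (N - 1)) * Gf s (of_real (real N))) \<le> g N"
    proof (rule eventually_sequentiallyI[of 1])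
      fix N :: nat assume N: "N \<ge> 1"
      define t where "t = real N"
      have t: "t \<ge> 1" using N by (simp add: t_def)
      have pp: "real (pp (N - 1)) \<le> t"
      proof -
        have "real (pp (N - 1)) \<le> real (N - 1)" unfolding pp_def by (rule prime_pi_le) simp
        then show ?thesis using N by (simp add: t_def)
      qed
      have lnt: "ln t \<le> t powr e / e" using t e by (intro ln_le_powr) auto
      have lt0: "ln t \<ge> 0" using t by simp
      have "norm (of_nat (pp (N - 1)) * Gf s (of_real t)) = real (pp (N - 1)) * norm (Gf s (of_real t))"
        by (simp add: norm_mult)
      also have "\<dots> \<le> t * (t powr (- Re s) * ln t / norm s + t powr (- Re s) / norm s ^ 2)"
        using t by (intro mult_mono pp norm_Gf s0) auto
      also have "\<dots> \<le> t * (t powr (- Re s) * (t powr e / e) / norm s + t powr (- Re s) / norm s ^ 2)"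
        using lnt t s0 by (intro mult_left_mono add_mono divide_right_mono mult_left_mono) auto
      also have "\<dots> = (t * t powr (- Re s)) * t powr e / (e * norm s) + (t * t powr (- Re s)) / norm s ^ 2"
        using e s0 by (simp add: field_simps)
      also have "t * t powr (- Re s) = t powr (1 - Re s)"
        using powr_mult_base[of t "- Re s"] t by simp
      also have "t powr (1 - Re s) * t powr e = t powr (1 - Re s + e)"
        by (simp add: powr_add)
      also have "t powr (1 - Re s + e) / (e * norm s) + t powr (1 - Re s) / norm s ^ 2 = g N"
        by (simp add: g_def t_def)
      finally show "norm (of_nat (pp (N - 1)) * Gf s (of_real (real N))) \<le> g N" by (simp add: t_def)
    qed
  qed
qed

lemma prime_sum_lim:
  assumes s: "Re s > 1"
  shows "(\<lambda>N. \<Sum>k<N. if prime k then Gf s (of_real (real k)) else 0) \<longlonglongrightarrow> - (Pz s / s ^ 2 + Qz s / s)"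
proof -
  have s0: "s \<noteq> 0" using s by auto
  define g where "g k = La s k / s + cp k s / s ^ 2" for k
  have gG: "Gf s (of_nat k) = - g k" if "k > 0" for k
  proof -
    have e: "(of_nat k :: complex) = of_real (real k)" by simp
    have "(of_real (real k) :: complex) powr (- s) = cp k s" by (simp add: cp_def)
    moreover have "Ln (of_real (real k) :: complex) = of_real (ln (real k))" using that by (simp add: Ln_of_real)
    ultimately show ?thesis unfolding Gf_def g_def La_def e by (simp add: field_simps)
  qed
  have SQ: "(\<lambda>n. La s (pr n)) sums Qz s"
    unfolding La_def Qz_def using summable_sums[OF summable_norm_cancel[OF summ_lncp[OF pr_ge1 s]]] .
  have SP: "(\<lambda>n. cp (pr n) s) sums Pz s"
    unfolding Pz_def using summable_sums[OF summable_norm_cancel[OF summ_cp[OF pr_ge1 s]]] .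
  have Sg: "(\<lambda>n. g (pr n)) sums (Pz s / s ^ 2 + Qz s / s)"
    unfolding g_def using sums_add[OF sums_divide[OF SQ, of s] sums_divide[OF SP, of "s^2"]] by (simp add: add.commute)
  have ng: "summable (\<lambda>n. norm (g (pr n)))"
  proof -
    have "summable (\<lambda>n. norm (La s (pr n)) / norm s + norm (cp (pr n) s) / norm s ^ 2)"
      using summ_lncp[OF pr_ge1 s] summ_cp[OF pr_ge1 s]
      by (intro summable_add summable_divide) (simp_all add: La_def)
    then show ?thesis
      by (rule summable_comparison_test'[where N=0])
         (simp add: g_def norm_divide norm_power order_trans[OF norm_triangle_ineq])
  qed
  have H1: "((\<lambda>n. g (pr n)) has_sum (Pz s / s ^ 2 + Qz s / s)) UNIV"
    by (rule norm_summable_imp_has_sum[OF ng Sg])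
  have H2: "(g has_sum (Pz s / s ^ 2 + Qz s / s)) {p. prime p}"
    using H1 has_sum_reindex_bij_betw[OF bij_pr, of g] by simp
  have H3: "((\<lambda>k. if prime k then g k else 0) has_sum (Pz s / s ^ 2 + Qz s / s)) UNIV"
    using H2 by (subst has_sum_cong_neutral[where T="{p. prime p}" and g=g]) auto
  have "(\<lambda>k. if prime k then g k else 0) sums (Pz s / s ^ 2 + Qz s / s)"
    by (rule has_sum_imp_sums[OF H3])
  then have "(\<lambda>N. \<Sum>k<N. if prime k then g k else 0) \<longlonglongrightarrow> (Pz s / s ^ 2 + Qz s / s)"
    by (simp add: sums_def)
  then have "(\<lambda>N. - (\<Sum>k<N. if prime k then g k else 0)) \<longlonglongrightarrow> - (Pz s / s ^ 2 + Qz s / s)"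
    by (rule tendsto_minus)
  moreover have "- (\<Sum>k<N. if prime k then g k else 0) = (\<Sum>k<N. if prime k then Gf s (of_real (real k)) else 0)" for N
    unfolding sum_negf[symmetric] by (intro sum.cong refl) (simp add: gG prime_gt_0_nat)
  ultimately show ?thesis by simp
qed

lemma Jf_lim:
  assumes s: "Re s > 1"
  shows "Jf s \<longlonglongrightarrow> Pz s / s ^ 2 + Qz s / s"
proof -
  have "(\<lambda>N. of_nat (pp (N - 1)) * Gf s (of_real (real N))
                  - (\<Sum>k<N. if prime k then Gf s (of_real (real k)) else 0))
        \<longlonglongrightarrow> 0 - (- (Pz s / s ^ 2 + Qz s / s))"
    by (intro tendsto_diff boundary_lim prime_sum_lim s)
  moreover have "\<forall>\<^sub>F N in sequentially. of_nat (pp (N - 1)) * Gf s (of_real (real N))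
                  - (\<Sum>k<N. if prime k then Gf s (of_real (real k)) else 0) = Jf s N"
    by (rule eventually_sequentiallyI[of 2]) (simp add: Jf_formula)
  ultimately have "Jf s \<longlonglongrightarrow> 0 - (- (Pz s / s ^ 2 + Qz s / s))"
    by (rule Lim_transform_eventually)
  then show ?thesis by (simp add: ac_simps)
qed


lemma norm_fint:
  assumes t: "t \<ge> 2" and s: "Re s > 1"
  shows "norm (fint s t) \<le> (1 / ((Re s - 1) / 2)) * t powr (- (Re s + 1) / 2)"
proof -
  define e where "e = (Re s - 1) / 2"
  have e: "e > 0" using s by (simp add: e_def)
  have t0: "t > 0" using t by simp
  have lt: "ln t \<ge> 0" using t by simp
  have "norm (fint s t) = real (prime_pi t) * ln t / t powr (Re s + 1)"
    unfolding fint_def using t0 lt by (simp add: norm_divide norm_mult norm_powr_real_powr)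
  also have "\<dots> \<le> t * ln t / t powr (Re s + 1)"
    using prime_pi_le[of t] t0 lt by (intro divide_right_mono mult_right_mono) auto
  also have "\<dots> = ln t * t powr (- Re s)"
  proof -
    have "t powr (Re s + 1) = t powr (Re s) * t" using t0 by (simp add: powr_add)
    then show ?thesis using t0 by (simp add: powr_minus field_simps)
  qed
  also have "\<dots> \<le> (t powr e / e) * t powr (- Re s)"
    by (intro mult_right_mono ln_le_powr) (use t0 e in auto)
  also have "\<dots> = (1 / e) * t powr (e - Re s)" by (simp add: powr_diff powr_minus field_simps)
  also have "e - Re s = - (Re s + 1) / 2" by (simp add: e_def field_simps)
  finally show ?thesis by (simp add: e_def)
qed

lemma integral_formula:
  assumes s: "Re s > 1"
  shows "integral {2..} (fint s) = Pz s / s ^ 2 + Qz s / s"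
proof -
  have s0: "s \<noteq> 0" using s by auto
  define h where "h t = (1 / ((Re s - 1) / 2)) * t powr (- (Re s + 1) / 2)" for t :: real
  have hint: "h integrable_on {2..}"
  proof -
    have "- (Re s + 1) / 2 < -1" using s by (simp add: field_simps)
    from has_integral_powr_to_inf[OF this, of 2]
    have "(\<lambda>t::real. t powr (- (Re s + 1) / 2)) integrable_on {2..}" by (auto simp: integrable_on_def)
    from integrable_on_cmult_left[OF this, of "1 / ((Re s - 1) / 2)"]
    show ?thesis unfolding h_def[abs_def] by simp
  qed
  define fk where "fk k t = (if t \<in> {..real k + 2} then fint s t else 0)" for k :: nat and t :: real
  have set_eq: "{..real k + 2} \<inter> {2..} = {2..real (k + 2)}" for k by auto
  have fkint: "fk k integrable_on {2..}" for k
  proof -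
    have "fint s integrable_on {2..real (k + 2)}"
      using fint_J[of "k + 2" s] s0 by (auto simp: integrable_on_def)
    then show ?thesis unfolding fk_def[abs_def] by (subst integrable_restrict_Int) (simp add: set_eq)
  qed
  have fkI: "integral {2..} (fk k) = Jf s (k + 2)" for k
  proof -
    have "integral {2..} (fk k) = integral {2..real (k + 2)} (fint s)"
      unfolding fk_def[abs_def] by (subst integral_restrict_Int) (simp add: set_eq)
    also have "\<dots> = Jf s (k + 2)" by (rule integral_unique[OF fint_J]) (use s0 in auto)
    finally show ?thesis .
  qed
  have le: "norm (fk k t) \<le> h t" if "t \<in> {2..}" for k t
  proof -
    have "norm (fint s t) \<le> h t" unfolding h_def using norm_fint[of t s] that s by simp
    moreover have "0 \<le> h t" using s by (simp add: h_def)
    ultimately show ?thesis by (simp add: fk_def)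
  qed
  have conv: "(\<lambda>k. fk k t) \<longlonglongrightarrow> fint s t" if "t \<in> {2..}" for t
  proof (rule tendsto_eventually)
    show "\<forall>\<^sub>F k in sequentially. fk k t = fint s t"
    proof (rule eventually_sequentiallyI[of "nat \<lceil>t\<rceil>"])
      fix k assume "nat \<lceil>t\<rceil> \<le> k"
      then have "t \<le> real k" by linarith
      then show "fk k t = fint s t" by (simp add: fk_def)
    qed
  qed
  have "(\<lambda>k. integral {2..} (fk k)) \<longlonglongrightarrow> integral {2..} (fint s)"
    by (rule dominated_convergence(2)[OF fkint hint le conv])
  then have L1: "(\<lambda>k. Jf s (k + 2)) \<longlonglongrightarrow> integral {2..} (fint s)" by (simp add: fkI)
  have L2: "(\<lambda>k. Jf s (k + 2)) \<longlonglongrightarrow> Pz s / s ^ 2 + Qz s / s"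
    by (rule LIMSEQ_ignore_initial_segment[OF Jf_lim[OF s]])
  show ?thesis by (rule LIMSEQ_unique[OF L1 L2])
qed


lemma Omega_open: "open Omega_half"
proof -
  have "compact (complex_of_real ` {1/2..1})"
    by (intro compact_continuous_image continuous_on_of_real_id compact_Icc)
  then have "closed (complex_of_real ` {1/2..1})" by (rule compact_imp_closed)
  then show ?thesis unfolding Omega_half_def by (intro open_Diff open_halfspace_Re_gt)
qed

lemma Omega_mem: "z \<in> Omega_half \<longleftrightarrow> Re z > 1/2 \<and> \<not> (Im z = 0 \<and> Re z \<le> 1)"
proof -
  have "z \<in> complex_of_real ` {1/2..1} \<longleftrightarrow> Im z = 0 \<and> 1/2 \<le> Re z \<and> Re z \<le> 1"
  proof
    assume "z \<in> complex_of_real ` {1/2..1}" then show "Im z = 0 \<and> 1/2 \<le> Re z \<and> Re z \<le> 1" by auto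
  next
    assume h: "Im z = 0 \<and> 1/2 \<le> Re z \<and> Re z \<le> 1"
    then have "z = complex_of_real (Re z)" by (simp add: complex_eq_iff)
    then show "z \<in> complex_of_real ` {1/2..1}" using h by (metis atLeastAtMost_iff image_eqI)
  qed
  then show ?thesis unfolding Omega_half_def by auto
qed

lemma Omega_starlike: "starlike Omega_half"
  unfolding starlike_def
proof (intro bexI[of _ 2] ballI subsetI)
  show "2 \<in> Omega_half" by (simp add: Omega_mem)
  fix x y assume x: "x \<in> Omega_half" and y: "y \<in> closed_segment 2 x"
  obtain u where u: "0 \<le> u" "u \<le> 1" "y = (1 - u) *\<^sub>R 2 + u *\<^sub>R x"
    using y unfolding closed_segment_def by auto
  have ry: "Re y = (1 - u) * 2 + u * Re x" and iy: "Im y = u * Im x" using u(3) by auto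
  have rx: "Re x > 1/2" using x by (simp add: Omega_mem)
  have "Re y > 1/2"
  proof -
    have "(1 - u) * 2 \<ge> (1 - u) * (1/2)" using u by (intro mult_left_mono) auto
    moreover have "u * Re x \<ge> u * (1/2)" using u rx by (intro mult_left_mono) auto
    moreover have "(1 - u) * 2 + u * Re x > (1 - u) * (1/2) + u * (1/2)"
    proof (cases "u = 1")
      case True then show ?thesis using rx by simp
    next
      case False then have "(1 - u) * 2 > (1 - u) * (1/2)" using u by (intro mult_strict_left_mono) auto
      then show ?thesis using \<open>u * Re x \<ge> u * (1/2)\<close> by linarith
    qed
    moreover have "(1 - u) * (1/2) + u * (1/2) = (1/2::real)" by (simp add: field_simps)
    ultimately show ?thesis using ry by linarith
  qed
  moreover have "\<not> (Im y = 0 \<and> Re y \<le> 1)"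
  proof
    assume h: "Im y = 0 \<and> Re y \<le> 1"
    show False
    proof (cases "u = 0")
      case True then show False using h ry by simp
    next
      case False
      then have "Im x = 0" using h iy by simp
      then have "Re x > 1" using x by (auto simp: Omega_mem)
      then have "u * Re x > u * 1" using False u by (intro mult_strict_left_mono) auto
      moreover have "(1 - u) * 2 + u * 1 \<ge> 1" using u by (simp add: algebra_simps)
      ultimately have "Re y > 1" using ry by linarith
      then show False using h by simp
    qed
  qed
  ultimately show "y \<in> Omega_half" by (simp add: Omega_mem)
qed

lemma Omega_connected: "connected Omega_half"
  by (rule starlike_imp_connected[OF Omega_starlike])

lemma Omega_sub_D0: "Omega_half \<subseteq> D0"
  by (auto simp: Omega_mem D0_def)

lemma Omega_sub_half: "Omega_half \<subseteq> {s. Re s > 1/2}"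
  by (auto simp: Omega_mem)

lemma Re1_sub_Omega: "{s. Re s > 1} \<subseteq> Omega_half"
  by (auto simp: Omega_mem)

lemma Omega_nz: "s \<in> Omega_half \<Longrightarrow> s \<noteq> 0"
  by (auto simp: Omega_mem)

lemma const_diff:
  assumes F: "\<And>s. Re s > 1 \<Longrightarrow> (F has_field_derivative f s) (at s)"
      and G: "\<And>s. Re s > 1 \<Longrightarrow> (G has_field_derivative f s) (at s)"
  shows "\<exists>c. \<forall>s. Re s > 1 \<longrightarrow> F s = G s + c"
proof -
  have D: "\<And>s. s \<in> {s. Re s > 1} \<Longrightarrow> ((\<lambda>s. F s - G s) has_field_derivative 0) (at s)"
    using DERIV_diff[OF F G] by fastforce
  have "continuous_on {s. Re s > 1} (\<lambda>s. F s - G s)"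
    using D by (intro continuous_at_imp_continuous_on ballI DERIV_isCont) blast
  then obtain c where "\<And>s. s \<in> {s. Re s > 1} \<Longrightarrow> F s - G s = c"
    using DERIV_zero_connected_constant[of "{s. Re s > 1}" "{}" "\<lambda>s. F s - G s"] D
      convex_connected[OF convex_halfspace_Re_gt] open_halfspace_Re_gt by auto
  then show ?thesis by (intro exI[of _ c]) (auto simp: algebra_simps)
qed

lemma primitive_Omega:
  assumes "f holomorphic_on Omega_half"
  shows "\<exists>g. \<forall>x\<in>Omega_half. (g has_field_derivative f x) (at x)"
  by (rule holomorphic_starlike_primitive[OF holomorphic_on_imp_continuous_on[OF assms] Omega_starlike Omega_open, of "{}"])
     (use assms Omega_open in \<open>auto simp: holomorphic_on_open field_differentiable_def\<close>)

definition RH :: bool where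
  "RH \<longleftrightarrow> (\<forall>s. Re s > 1/2 \<and> s \<noteq> 1 \<longrightarrow> riemann_zeta s \<noteq> 0)"

lemma RH_imp_Q:
  assumes RH
  shows "\<exists>Qx. Qx holomorphic_on Omega_half \<and> (\<forall>s. Re s > 1 \<longrightarrow> Qx s = Qz s)"
proof -
  have nz: "zeta0 s \<noteq> 0" if "s \<in> Omega_half" for s
  proof -
    have "s \<in> D0" using that Omega_sub_D0 by auto
    moreover have "Re s > 1/2" "s \<noteq> 1" using that by (auto simp: Omega_mem)
    ultimately show ?thesis using assms rz_eq unfolding RH_def by metis
  qed
  have hz: "zeta0 holomorphic_on Omega_half" by (rule holomorphic_on_subset[OF zeta0_holo Omega_sub_D0])
  have hd: "deriv zeta0 holomorphic_on Omega_half"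
    by (rule holomorphic_on_subset[OF holomorphic_deriv[OF zeta0_holo open_D0] Omega_sub_D0])
  define Qx where "Qx s = - deriv zeta0 s / zeta0 s - Rz s" for s
  have "Qx holomorphic_on Omega_half"
    unfolding Qx_def[abs_def]
    by (intro holomorphic_intros hd hz holomorphic_on_subset[OF Rz_holo Omega_sub_half] nz)
  moreover have "Qx s = Qz s" if "Re s > 1" for s
  proof -
    have "deriv zeta0 s = - (Qz s + Rz s) * zeta0 s" by (rule DERIV_imp_deriv[OF zeta0_deriv[OF that]])
    moreover have "zeta0 s \<noteq> 0" using nz that Re1_sub_Omega by auto
    ultimately show ?thesis by (simp add: Qx_def)
  qed
  ultimately show ?thesis by blast
qed

lemma Q_imp_RH:
  assumes hQ: "Qx holomorphic_on Omega_half" and eQ: "\<And>s. Re s > 1 \<Longrightarrow> Qx s = Qz s"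
  shows RH
proof -
  define Zx where "Zx s = Qx s + Rz s" for s
  have hZ: "Zx holomorphic_on Omega_half"
    unfolding Zx_def[abs_def] by (intro holomorphic_intros hQ holomorphic_on_subset[OF Rz_holo Omega_sub_half])
  obtain E where E: "\<And>x. x \<in> Omega_half \<Longrightarrow> (E has_field_derivative Zx x) (at x)"
    using primitive_Omega[OF hZ] by blast
  have hz: "zeta0 holomorphic_on Omega_half" by (rule holomorphic_on_subset[OF zeta0_holo Omega_sub_D0])
  have hd: "deriv zeta0 holomorphic_on Omega_half"
    by (rule holomorphic_on_subset[OF holomorphic_deriv[OF zeta0_holo open_D0] Omega_sub_D0])
  have ode: "deriv zeta0 s + Zx s * zeta0 s = 0" if "s \<in> Omega_half" for s
  proof (rule analytic_continuation_open[of "{s. Re s > 1}" Omega_half "\<lambda>s. deriv zeta0 s + Zx s * zeta0 s" "\<lambda>_. 0" s])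
    show "open {s. Re s > 1}" by (rule open_halfspace_Re_gt)
    show "{s. Re s > 1} \<noteq> {}" by (auto intro: exI[of _ 2])
    show "(\<lambda>s. deriv zeta0 s + Zx s * zeta0 s) holomorphic_on Omega_half"
      by (intro holomorphic_intros hd hZ hz)
    show "\<And>z. z \<in> {s. Re s > 1} \<Longrightarrow> deriv zeta0 z + Zx z * zeta0 z = 0"
    proof -
      fix z assume "z \<in> {s. Re s > 1}"
      then have z: "Re z > 1" by simp
      have dz: "deriv zeta0 z = - (Qz z + Rz z) * zeta0 z" by (rule DERIV_imp_deriv[OF zeta0_deriv[OF z]])
      show "deriv zeta0 z + Zx z * zeta0 z = 0" by (simp only: dz Zx_def eQ[OF z]) (simp add: algebra_simps)
    qed
  qed (use Omega_open Omega_connected Re1_sub_Omega that in auto)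
  define phi0 where "phi0 s = zeta0 s * exp (E s)" for s
  have dphi: "(phi0 has_field_derivative 0) (at s)" if "s \<in> Omega_half" for s
  proof -
    have sD: "s \<in> D0" using that Omega_sub_D0 by auto
    have dz: "(zeta0 has_field_derivative deriv zeta0 s) (at s)"
      by (rule holomorphic_derivI[OF zeta0_holo open_D0 sD])
    have de: "((\<lambda>s. exp (E s)) has_field_derivative exp (E s) * Zx s) (at s)"
      by (rule DERIV_chain2[OF DERIV_exp E[OF that]])
    have "(phi0 has_field_derivative (deriv zeta0 s * exp (E s) + (exp (E s) * Zx s) * zeta0 s)) (at s)"
      unfolding phi0_def[abs_def] by (rule DERIV_mult[OF dz de])
    also have "deriv zeta0 s * exp (E s) + (exp (E s) * Zx s) * zeta0 s = (deriv zeta0 s + Zx s * zeta0 s) * exp (E s)"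
      by (simp add: algebra_simps)
    also have "\<dots> = 0" using ode[OF that] by simp
    finally show ?thesis .
  qed
  have "continuous_on Omega_half phi0"
    using dphi by (intro continuous_at_imp_continuous_on ballI DERIV_isCont) blast
  then obtain c where c: "\<And>s. s \<in> Omega_half \<Longrightarrow> phi0 s = c"
    using DERIV_zero_connected_constant[OF Omega_connected Omega_open finite.emptyI, of phi0] dphi by auto
  have "c \<noteq> 0"
  proof -
    have "(2::complex) \<in> Omega_half" by (simp add: Omega_mem)
    then have "c = zeta0 2 * exp (E 2)" using c by (simp add: phi0_def)
    then show ?thesis using zeta0_2 by simp
  qed
  then have znz: "zeta0 s \<noteq> 0" if "s \<in> Omega_half" for s
    using c[OF that] by (auto simp: phi0_def)
  show RH unfolding RH_def
  proof (intro allI impI)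
    fix s assume s: "Re s > 1/2 \<and> s \<noteq> 1"
    show "riemann_zeta s \<noteq> 0"
    proof (cases "s \<in> Omega_half")
      case True
      then have "s \<in> D0" using Omega_sub_D0 by auto
      then show ?thesis using rz_eq znz[OF True] by simp
    next
      case False
      then have im: "Im s = 0" and re: "Re s \<le> 1" using s by (auto simp: Omega_mem)
      then have se: "s = of_real (Re s)" by (simp add: complex_eq_iff)
      have "Re s < 1" using re s se by (metis of_real_1 order_le_imp_less_or_eq)
      then have "zeta0 (of_real (Re s)) \<noteq> 0" using s by (intro zeta0_real_neg) auto
      moreover have "s \<in> D0" using s by (auto simp: D0_def)
      ultimately show ?thesis using rz_eq se by metis
    qed
  qed
qed


lemma holo_from_deriv:
  assumes "\<And>x. x \<in> Omega_half \<Longrightarrow> (E has_field_derivative e x) (at x)"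
  shows "E holomorphic_on Omega_half"
  using assms Omega_open by (auto simp: holomorphic_on_open)

lemma part1:
  "RH \<longleftrightarrow> (\<forall>M. is_arith_list M \<longrightarrow>
             (\<exists>g. g analytic_on Omega_half \<and> (\<forall>s. Re s > 1 \<longrightarrow> g s = deriv (eta_M M) s)))"
proof
  assume RH
  then obtain Qx where hQ: "Qx holomorphic_on Omega_half" and eQ: "\<And>s. Re s > 1 \<Longrightarrow> Qx s = Qz s"
    using RH_imp_Q by blast
  show "\<forall>M. is_arith_list M \<longrightarrow> (\<exists>g. g analytic_on Omega_half \<and> (\<forall>s. Re s > 1 \<longrightarrow> g s = deriv (eta_M M) s))"
  proof (intro allI impI)
    fix M assume "is_arith_list M"
    then obtain r r0 where r: "1 \<le> r" and r0: "1 \<le> r0" and M: "M = arith_list r r0"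
      unfolding is_arith_list_def by blast
    obtain T where hT: "T holomorphic_on {s. Re s > 1/2}"
      and eT: "\<And>s. Re s > 1 \<Longrightarrow> of_nat r * (\<Sum>j. La s (qs r r0 j)) = Qz s + T s"
      using arith_T[OF r r0] by blast
    define g where "g s = - (Qx s + T s) / of_nat r" for s
    have "g holomorphic_on Omega_half"
      unfolding g_def[abs_def] using r
      by (intro holomorphic_intros hQ holomorphic_on_subset[OF hT Omega_sub_half]) auto
    then have "g analytic_on Omega_half" using analytic_on_open[OF Omega_open] by blast
    moreover have "g s = deriv (eta_M M) s" if s: "Re s > 1" for s
    proof -
      have "deriv (eta_M M) s = (\<Sum>j. - of_real (ln (real (qs r r0 j))) * cp (qs r r0 j) s)"
        unfolding M arith_list_eq[OF r0] by (rule deriv_eta_M_range[OF qs_inj[OF r] qs_ge[OF r] s])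
      also have "\<dots> = - (\<Sum>j. La s (qs r r0 j))"
        unfolding La_def using summ_lncp[OF qs_ge[OF r] s]
        by (subst suminf_minus[symmetric]) (auto intro: summable_norm_cancel)
      also have "\<dots> = - (Qz s + T s) / of_nat r"
        using eT[OF s] r by (simp add: field_simps)
      also have "\<dots> = g s" using eQ[OF s] by (simp add: g_def)
      finally show ?thesis by simp
    qed
    ultimately show "\<exists>g. g analytic_on Omega_half \<and> (\<forall>s. Re s > 1 \<longrightarrow> g s = deriv (eta_M M) s)"
      by blast
  qed
next
  assume "\<forall>M. is_arith_list M \<longrightarrow> (\<exists>g. g analytic_on Omega_half \<and> (\<forall>s. Re s > 1 \<longrightarrow> g s = deriv (eta_M M) s))"
  then obtain g where g: "g analytic_on Omega_half" and eg: "\<And>s. Re s > 1 \<Longrightarrow> g s = deriv (eta_M (arith_list 1 1)) s"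
    using is_arith_list_1 by blast
  have "(\<lambda>s. - g s) holomorphic_on Omega_half"
    using g analytic_on_open[OF Omega_open] by (intro holomorphic_intros) blast
  moreover have "- g s = Qz s" if "Re s > 1" for s using eg[OF that] deriv_eta_all[OF that] by simp
  ultimately show RH by (rule Q_imp_RH)
qed

lemma integrand_eq: "(\<lambda>t::real. of_real (real (prime_pi t) * ln t) / of_real t powr (s + 1)) = fint s"
  by (simp add: fint_def[abs_def])

lemma Qz_deriv_ex: "Re s > 1 \<Longrightarrow> (Qz has_field_derivative (\<Sum>n. - of_real (ln (real (pr n))) * of_real (ln (real (pr n))) * cp (pr n) s)) (at s)"
  using dser2[OF pr_ge1] unfolding Qz_def[abs_def] by blast

lemma part2:
  "RH \<longleftrightarrow> (\<exists>g. g analytic_on Omega_half \<and>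
             (\<forall>s. Re s > 1 \<longrightarrow> g s = integral {2..}
                (\<lambda>t::real. of_real (real (prime_pi t) * ln t) / of_real t powr (s + 1))))"
  unfolding integrand_eq
proof
  assume RH
  then obtain Qx where hQ: "Qx holomorphic_on Omega_half" and eQ: "\<And>s. Re s > 1 \<Longrightarrow> Qx s = Qz s"
    using RH_imp_Q by blast
  have "(\<lambda>s. - Qx s) holomorphic_on Omega_half" using hQ by (intro holomorphic_intros)
  then obtain E where E: "\<And>x. x \<in> Omega_half \<Longrightarrow> (E has_field_derivative - Qx x) (at x)"
    using primitive_Omega by blast
  have "\<exists>c. \<forall>s. Re s > 1 \<longrightarrow> Pz s = E s + c"
  proof (rule const_diff)
    show "\<And>s. Re s > 1 \<Longrightarrow> (Pz has_field_derivative - Qz s) (at s)" by (rule Pz_deriv)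
    show "\<And>s. Re s > 1 \<Longrightarrow> (E has_field_derivative - Qz s) (at s)"
      using E Re1_sub_Omega eQ by fastforce
  qed
  then obtain c where c: "\<And>s. Re s > 1 \<Longrightarrow> Pz s = E s + c" by blast
  define g where "g s = (E s + c) / s ^ 2 + Qx s / s" for s
  have hE: "E holomorphic_on Omega_half" by (rule holo_from_deriv[OF E])
  have "g holomorphic_on Omega_half"
    unfolding g_def[abs_def] using Omega_nz by (intro holomorphic_intros hE hQ) auto
  then have "g analytic_on Omega_half" using analytic_on_open[OF Omega_open] by blast
  moreover have "g s = integral {2..} (fint s)" if "Re s > 1" for s
    using integral_formula[OF that] c[OF that] eQ[OF that] by (simp add: g_def)
  ultimately show "\<exists>g. g analytic_on Omega_half \<and> (\<forall>s. Re s > 1 \<longrightarrow> g s = integral {2..} (fint s))"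
    by blast
next
  assume "\<exists>g. g analytic_on Omega_half \<and> (\<forall>s. Re s > 1 \<longrightarrow> g s = integral {2..} (fint s))"
  then obtain g where g: "g analytic_on Omega_half" and eg: "\<And>s. Re s > 1 \<Longrightarrow> g s = integral {2..} (fint s)"
    by blast
  have hg: "g holomorphic_on Omega_half" using g analytic_on_open[OF Omega_open] by blast
  define Qd where "Qd s = (\<Sum>n. - of_real (ln (real (pr n))) * of_real (ln (real (pr n))) * cp (pr n) s)" for s
  have h2: "(\<lambda>s. s ^ 2 * g s) holomorphic_on Omega_half" by (intro holomorphic_intros hg)
  define W where "W s = deriv (\<lambda>s. s ^ 2 * g s) s / s" for s
  have hW: "W holomorphic_on Omega_half"
    unfolding W_def[abs_def] using Omega_nz by (intro holomorphic_intros holomorphic_deriv[OF h2 Omega_open]) auto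
  have WQ: "W s = Qd s" if s: "Re s > 1" for s
  proof -
    have s0: "s \<noteq> 0" using s by auto
    have dm: "((\<lambda>x. x * Qz x) has_field_derivative s * Qd s + 1 * Qz s) (at s)"
      by (rule DERIV_mult'[OF DERIV_ident Qz_deriv_ex[OF s, folded Qd_def]])
    have d1: "((\<lambda>s. Pz s + s * Qz s) has_field_derivative (- Qz s + (s * Qd s + 1 * Qz s))) (at s)"
      by (rule DERIV_add[OF Pz_deriv[OF s] dm])
    have eqf: "s' ^ 2 * g s' = Pz s' + s' * Qz s'" if "s' \<in> {s. Re s > 1}" for s'
    proof -
      have "s' \<noteq> 0" using that by auto
      then show ?thesis using eg[of s'] integral_formula[of s'] that by (simp add: field_simps power2_eq_square)
    qed
    have "((\<lambda>s. s ^ 2 * g s) has_field_derivative (- Qz s + (s * Qd s + 1 * Qz s))) (at s)"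
      by (rule has_field_derivative_transform_within_open[OF d1 open_halfspace_Re_gt[of 1]])
         (use s eqf in auto)
    then have "deriv (\<lambda>s. s ^ 2 * g s) s = s * Qd s" by (simp add: DERIV_imp_deriv)
    then show ?thesis using s0 by (simp add: W_def)
  qed
  obtain Q0 where Q0: "\<And>x. x \<in> Omega_half \<Longrightarrow> (Q0 has_field_derivative W x) (at x)"
    using primitive_Omega[OF hW] by blast
  have "\<exists>c. \<forall>s. Re s > 1 \<longrightarrow> Q0 s = Qz s + c"
  proof (rule const_diff)
    show "\<And>s. Re s > 1 \<Longrightarrow> (Q0 has_field_derivative Qd s) (at s)"
      using Q0 Re1_sub_Omega WQ by fastforce
    show "\<And>s. Re s > 1 \<Longrightarrow> (Qz has_field_derivative Qd s) (at s)"
      using Qz_deriv_ex unfolding Qd_def by blast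
  qed
  then obtain c where c: "\<And>s. Re s > 1 \<Longrightarrow> Q0 s = Qz s + c" by blast
  have "(\<lambda>s. Q0 s - c) holomorphic_on Omega_half"
    by (intro holomorphic_intros holo_from_deriv[OF Q0])
  moreover have "Q0 s - c = Qz s" if "Re s > 1" for s using c[OF that] by simp
  ultimately show RH by (rule Q_imp_RH)
qed

theorem mainTheorem10:
  shows "((\<forall>s. Re s > 1/2 \<and> s \<noteq> 1 \<longrightarrow> riemann_zeta s \<noteq> 0)
      \<longleftrightarrow> (\<forall>M. is_arith_list M \<longrightarrow>
             (\<exists>g. g analytic_on Omega_half \<and>
                  (\<forall>s. Re s > 1 \<longrightarrow> g s = deriv (eta_M M) s))))
    \<and> ((\<forall>s. Re s > 1/2 \<and> s \<noteq> 1 \<longrightarrow> riemann_zeta s \<noteq> 0)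
      \<longleftrightarrow> (\<exists>g. g analytic_on Omega_half \<and>
             (\<forall>s. Re s > 1 \<longrightarrow> g s = integral {2..}
                (\<lambda>t::real. of_real (real (prime_pi t) * ln t) / of_real t powr (s + 1)))))"
  using part1 part2 unfolding RH_def by blast

end
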